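(* Let $i,j\ge0$ be real numbers with $i+j=1$, and let $\mathbf{x}\in\mathrm{Bad}(i,j)$. Then the Hausdorff dimension of $\mathrm{Bad}^{\mathbf{x}}(i,j)$ equals $2$.
   Context: $\|\cdot\|$ denotes the distance to the nearest integer. Convention: if $i=0$ then $\|y\|^{1/i}:=0$ (and likewise for $j$). A vector $\mathbf{x}=(x_1,x_2)$ is irrational if $1,x_1,x_2$ are linearly independent over $\mathbb{Q}$. $\mathrm{Bad}(i,j)$ is the set of irrational $\mathbf{x}\in[0,1]^2$ for which there is a constant $c(\mathbf{x})>0$ with $\max\{\|qx_1\|^{1/i},\|qx_2\|^{1/j}\}>c(\mathbf{x})/q$ for all $q\in\mathbb{N}$. For irrational $\mathbf{x}\in[0,1]^2$, $\mathrm{Bad}^{\mathbf{x}}(i,j)$ is the set of $\boldsymbol\gamma=(\gamma_1,\gamma_2)\in[0,1]^2$ for which there exists $c(\boldsymbol\gamma)>0$ such that $\max\{\|qx_1-\gamma_1\|^{1/i},\|qx_2-\gamma_2\|^{1/j}\}>c(\boldsymbol\gamma)/|q|$ for all nonzero integers $q$. *)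

theory Defs
  imports "HOL-Analysis.Analysis"
begin

definition dist_int :: "real \<Rightarrow> real" where
  "dist_int y = \<bar>y - of_int (round y)\<bar>"

definition wpow :: "real \<Rightarrow> real \<Rightarrow> real" where
  "wpow y i = (if i = 0 then 0 else dist_int y powr (1 / i))"

definition irrational_vec :: "real \<times> real \<Rightarrow> bool" where
  "irrational_vec x \<longleftrightarrow>
     (\<forall>a b c. a \<in> \<rat> \<and> b \<in> \<rat> \<and> c \<in> \<rat> \<and> a + b * fst x + c * snd x = 0
        \<longrightarrow> a = 0 \<and> b = 0 \<and> c = 0)"

definition unit_square :: "(real \<times> real) set" where
  "unit_square = {0..1} \<times> {0..1}"

definition Bad :: "real \<Rightarrow> real \<Rightarrow> (real \<times> real) set" where
  "Bad i j = {x \<in> unit_square. irrational_vec x \<and>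
      (\<exists>c>0. \<forall>q::nat. q \<ge> 1 \<longrightarrow>
         max (wpow (real q * fst x) i) (wpow (real q * snd x) j) > c / real q)}"

definition Bad_inhom :: "real \<times> real \<Rightarrow> real \<Rightarrow> real \<Rightarrow> (real \<times> real) set" where
  "Bad_inhom x i j = {\<gamma> \<in> unit_square.
      (\<exists>c>0. \<forall>q::int. q \<noteq> 0 \<longrightarrow>
         max (wpow (real_of_int q * fst x - fst \<gamma>) i) (wpow (real_of_int q * snd x - snd \<gamma>) j)
           > c / \<bar>real_of_int q\<bar>)}"

definition cover_sum :: "real \<Rightarrow> (nat \<Rightarrow> 'a::metric_space set) \<Rightarrow> ennreal" where
  "cover_sum s U = (\<Sum>n. (if U n = {} then 0
        else if s = 0 then 1 else ennreal (diameter (U n) powr s)))"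

definition hausdorff_pre :: "real \<Rightarrow> real \<Rightarrow> 'a::metric_space set \<Rightarrow> ennreal" where
  "hausdorff_pre s \<delta> A = (INF U \<in> {U. A \<subseteq> (\<Union>n. U n) \<and>
        (\<forall>n. bounded (U n) \<and> diameter (U n) \<le> \<delta>)}. cover_sum s U)"

definition hausdorff_measure :: "real \<Rightarrow> 'a::metric_space set \<Rightarrow> ennreal" where
  "hausdorff_measure s A = (SUP \<delta> \<in> {0<..}. hausdorff_pre s \<delta> A)"

definition hausdorff_dim :: "'a::metric_space set \<Rightarrow> ereal" where
  "hausdorff_dim A = Inf (ereal ` {s. s \<ge> 0 \<and> hausdorff_measure s A = 0})"

end

theory Submission
  imports Defs
begin


definition sqbox :: "nat \<Rightarrow> nat \<Rightarrow> nat \<times> nat \<Rightarrow> (real \<times> real) set" where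
  "sqbox N L P = {real (fst P) / real N ^ L .. (real (fst P) + 1) / real N ^ L} \<times>
                 {real (snd P) / real N ^ L .. (real (snd P) + 1) / real N ^ L}"

definition children :: "nat \<Rightarrow> nat \<times> nat \<Rightarrow> (nat \<times> nat) set" where
  "children N P = (\<lambda>(u,v). (N * fst P + u, N * snd P + v)) ` ({..<N} \<times> {..<N})"

definition anc :: "nat \<Rightarrow> nat \<Rightarrow> nat \<times> nat \<Rightarrow> nat \<times> nat" where
  "anc N k P = (fst P div N ^ k, snd P div N ^ k)"

lemma sqbox_anc_subset:
  assumes "N \<ge> 1"
  shows "sqbox N (L + k) P \<subseteq> sqbox N L (anc N k P)"
proof -
  have key: "real a / real N ^ (L + k) \<ge> real (a div N ^ k) / real N ^ L \<and>
      (real a + 1) / real N ^ (L + k) \<le> (real (a div N ^ k) + 1) / real N ^ L" for a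
  proof -
    define K where "K = N ^ k"
    have Kpos: "K > 0" using assms by (simp add: K_def)
    have e: "real N ^ (L + k) = real N ^ L * real K" by (simp add: K_def power_add)
    have NL: "real N ^ L > 0" using assms by simp
    have d1: "K * (a div K) \<le> a" by simp
    have d2: "a + 1 \<le> K * (a div K + 1)"
      proof -
      have "a = K*(a div K) + a mod K" by simp
      moreover have "a mod K < K" using Kpos by simp
      moreover have "K*(a div K + 1) = K*(a div K) + K" by simp
      ultimately show ?thesis by linarith
    qed
    have r1: "real K * real (a div K) \<le> real a" using d1 by (metis of_nat_le_iff of_nat_mult)
    have r2: "real a + 1 \<le> real K * (real (a div K) + 1)" using d2
      by (metis of_nat_1 of_nat_add of_nat_le_iff of_nat_mult)
    have Kr: "real K > 0" using Kpos by simp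
    have s1: "real (a div K) \<le> real a / real K" using r1 Kr by (simp add: le_divide_eq mult.commute)
    have s2: "(real a + 1) / real K \<le> real (a div K) + 1" using r2 Kr by (simp add: divide_le_eq mult.commute)
    have t1: "real a / (real N ^ L * real K) = (real a / real K) / real N ^ L" by simp
    have t2: "(real a + 1) / (real N ^ L * real K) = ((real a + 1) / real K) / real N ^ L" by simp
    have u1: "real (a div K) / real N ^ L \<le> (real a / real K) / real N ^ L"
      using s1 NL by (intro divide_right_mono) auto
    have u2: "((real a + 1) / real K) / real N ^ L \<le> (real (a div K) + 1) / real N ^ L"
      using s2 NL by (intro divide_right_mono) auto
    show ?thesis unfolding e K_def[symmetric] using u1 u2 t1 t2 by linarith
  qed
  show ?thesis unfolding sqbox_def anc_def
    apply clarsimp using key[of "fst P"] key[of "snd P"] by (intro conjI; linarith)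
qed

definition goodch :: "nat \<Rightarrow> (nat \<Rightarrow> nat \<times> nat \<Rightarrow> bool) \<Rightarrow> nat \<Rightarrow> nat \<times> nat \<Rightarrow> (nat \<times> nat) set" where
  "goodch N G L P = {Q \<in> children N P. G L Q}"

definition grid :: "nat \<Rightarrow> nat \<Rightarrow> (nat \<times> nat) set" where
  "grid N L = {..<N^L} \<times> {..<N^L}"

lemma children_grid:
  assumes "P \<in> grid N L" shows "children N P \<subseteq> grid N (Suc L)"
proof
  fix Q assume "Q \<in> children N P"
  then obtain u v where uv: "u < N" "v < N" "Q = (N * fst P + u, N * snd P + v)"
    unfolding children_def by auto
  have "N * a + u < N ^ Suc L" if "a < N ^ L" "u < N" for a u
  proof -
    have "a + 1 \<le> N ^ L" using that by simp
    hence "N * (a + 1) \<le> N * N ^ L" by (rule mult_left_mono) simp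
    thus ?thesis using that by simp
  qed
  thus "Q \<in> grid N (Suc L)" using assms uv unfolding grid_def by (cases P) auto
qed

lemma anc_children:
  assumes "N > 0" "Q \<in> children N P" shows "anc N 1 Q = P"
  using assms unfolding children_def anc_def by (cases P) auto

lemma anc_0[simp]: "anc N 0 Q = Q" by (simp add: anc_def)

lemma anc_Suc: "anc N (Suc k) Q = anc N k (anc N 1 Q)"
  by (simp add: anc_def div_mult2_eq mult.commute)

locale cantor =
  fixes N M :: nat and G :: "nat \<Rightarrow> nat \<times> nat \<Rightarrow> bool"
  assumes N2: "N \<ge> 2" and M1: "M \<ge> 1"
    and good: "\<And>L P. P \<in> grid N L \<Longrightarrow> M \<le> card (goodch N G (Suc L) P)"
begin

definition pick :: "nat \<Rightarrow> nat \<times> nat \<Rightarrow> (nat \<times> nat) set" where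
  "pick L P = (SOME S. S \<subseteq> goodch N G L P \<and> card S = M \<and> finite S)"

primrec alive :: "nat \<Rightarrow> (nat \<times> nat) set" where
  "alive 0 = {(0,0)}"
| "alive (Suc L) = (\<Union>P\<in>alive L. pick (Suc L) P)"

lemma pick_props:
  assumes "P \<in> grid N L"
  shows "pick (Suc L) P \<subseteq> goodch N G (Suc L) P \<and> card (pick (Suc L) P) = M \<and> finite (pick (Suc L) P)"
proof -
  obtain T where "T \<subseteq> goodch N G (Suc L) P" "card T = M" "finite T"
    using obtain_subset_with_card_n[OF good[OF assms]] by metis
  hence "\<exists>S. S \<subseteq> goodch N G (Suc L) P \<and> card S = M \<and> finite S" by blast
  thus ?thesis unfolding pick_def by (rule someI_ex)
qed

lemma alive_grid: "alive L \<subseteq> grid N L"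
proof (induction L)
  case 0 then show ?case by (simp add: grid_def)
next
  case (Suc L)
  show ?case
  proof
    fix Q assume "Q \<in> alive (Suc L)"
    then obtain P where P: "P \<in> alive L" "Q \<in> pick (Suc L) P" by auto
    have "P \<in> grid N L" using P Suc by auto
    hence "Q \<in> children N P" using pick_props P(2) unfolding goodch_def by blast
    thus "Q \<in> grid N (Suc L)" using children_grid \<open>P \<in> grid N L\<close> by blast
  qed
qed

lemma pick_alive:
  assumes "P \<in> alive L"
  shows "pick (Suc L) P \<subseteq> goodch N G (Suc L) P" "card (pick (Suc L) P) = M" "finite (pick (Suc L) P)"
  using pick_props[of P L] alive_grid assms by auto

lemma alive_good: "Q \<in> alive (Suc L) \<Longrightarrow> G (Suc L) Q"
  using pick_alive(1) unfolding goodch_def by auto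

lemma alive_parent:
  assumes "Q \<in> alive (Suc L)"
  shows "anc N 1 Q \<in> alive L \<and> Q \<in> pick (Suc L) (anc N 1 Q)"
proof -
  obtain P where P: "P \<in> alive L" "Q \<in> pick (Suc L) P" using assms by auto
  have "Q \<in> children N P" using pick_alive(1)[OF P(1)] P(2) unfolding goodch_def by blast
  hence "anc N 1 Q = P" using anc_children N2 by auto
  thus ?thesis using P by simp
qed

lemma alive_anc: "Q \<in> alive (L + k) \<Longrightarrow> anc N k Q \<in> alive L"
proof (induction k arbitrary: Q)
  case 0 then show ?case by simp
next
  case (Suc k)
  hence "anc N 1 Q \<in> alive (L + k)" using alive_parent by simp
  thus ?case using Suc.IH anc_Suc by metis
qed

lemma finite_alive: "finite (alive L)"
  using alive_grid[of L] unfolding grid_def by (rule finite_subset) auto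

lemma card_alive: "card (alive L) = M ^ L"
proof (induction L)
  case 0 then show ?case by simp
next
  case (Suc L)
  have disj: "pick (Suc L) P \<inter> pick (Suc L) P' = {}" if "P \<in> alive L" "P' \<in> alive L" "P \<noteq> P'" for P P'
  proof -
    { fix Q assume Q: "Q \<in> pick (Suc L) P" "Q \<in> pick (Suc L) P'"
      have "Q \<in> children N P" "Q \<in> children N P'"
        using pick_alive(1) that Q unfolding goodch_def by blast+
      have N0: "N > 0" using N2 by simp
      have "anc N 1 Q = P" by (rule anc_children[OF N0 \<open>Q \<in> children N P\<close>])
      moreover have "anc N 1 Q = P'" by (rule anc_children[OF N0 \<open>Q \<in> children N P'\<close>])
      ultimately have "P = P'" by simp }
    thus ?thesis using that by blast
  qed
  have "card (alive (Suc L)) = (\<Sum>P\<in>alive L. card (pick (Suc L) P))"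
    unfolding alive.simps
  proof (rule card_UN_disjoint[OF finite_alive])
    show "\<forall>i\<in>alive L. finite (pick (Suc L) i)" using pick_alive(3) by blast
    show "\<forall>i\<in>alive L. \<forall>j\<in>alive L. i \<noteq> j \<longrightarrow> pick (Suc L) i \<inter> pick (Suc L) j = {}"
      using disj by blast
  qed
  also have "\<dots> = (\<Sum>P\<in>alive L. M)" using pick_alive(2) by simp
  also have "\<dots> = M ^ Suc L" using Suc by simp
  finally show ?case .
qed

lemma desc_card: "card {Q \<in> alive (L + k). anc N k Q = P} \<le> M ^ k"
proof (induction k)
  case 0
  have "{Q \<in> alive (L + 0). anc N 0 Q = P} \<subseteq> {P}" by auto
  hence "card {Q \<in> alive (L + 0). anc N 0 Q = P} \<le> card {P}" by (meson card_mono finite.emptyI finite.insertI)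
  thus ?case by simp
next
  case (Suc k)
  let ?D = "{Q \<in> alive (L + k). anc N k Q = P}"
  have sub: "{Q \<in> alive (L + Suc k). anc N (Suc k) Q = P} \<subseteq> (\<Union>R\<in>?D. pick (Suc (L + k)) R)"
  proof
    fix Q assume Q: "Q \<in> {Q \<in> alive (L + Suc k). anc N (Suc k) Q = P}"
    have QQ: "Q \<in> alive (Suc (L + k))" "anc N (Suc k) Q = P" using Q by auto
    hence "anc N 1 Q \<in> alive (L + k) \<and> Q \<in> pick (Suc (L+k)) (anc N 1 Q)"
      by (intro alive_parent)
    moreover have "anc N k (anc N 1 Q) = P" using QQ(2) anc_Suc by metis
    ultimately show "Q \<in> (\<Union>R\<in>?D. pick (Suc (L + k)) R)" by blast
  qed
  have fD: "finite ?D" using finite_alive by simp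
  have "card {Q \<in> alive (L + Suc k). anc N (Suc k) Q = P} \<le> card (\<Union>R\<in>?D. pick (Suc (L + k)) R)"
  proof (rule card_mono[OF _ sub])
    show "finite (\<Union>R\<in>?D. pick (Suc (L + k)) R)"
      using fD pick_alive(3) by blast
  qed
  also have "\<dots> \<le> (\<Sum>R\<in>?D. card (pick (Suc (L + k)) R))" by (rule card_UN_le[OF fD])
  also have "\<dots> = (\<Sum>R\<in>?D. M)" using pick_alive(2) by (intro sum.cong) auto
  also have "\<dots> = card ?D * M" by simp
  also have "\<dots> \<le> M ^ k * M" using Suc by (intro mult_right_mono) auto
  finally show ?case by (simp add: mult.commute)
qed

end

lemma closed_sqbox: "closed (sqbox N L P)"
  unfolding sqbox_def by (intro closed_Times closed_atLeastAtMost)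

lemma compact_sqbox: "compact (sqbox N L P)"
  unfolding sqbox_def by (intro compact_Times compact_Icc)

lemma sqbox_nonempty: "sqbox N L P \<noteq> {}"
proof -
  have "real N ^ L \<ge> 0" by simp
  hence "real (fst P) / real N ^ L \<le> (real (fst P) + 1) / real N ^ L"
        "real (snd P) / real N ^ L \<le> (real (snd P) + 1) / real N ^ L"
    by (auto intro: divide_right_mono)
  thus ?thesis unfolding sqbox_def by auto
qed

lemma sqbox_root: "sqbox N 0 (0,0) = {0..1} \<times> {0..1}"
  by (simp add: sqbox_def)

context cantor
begin

definition Kset :: "(real \<times> real) set" where
  "Kset = {\<gamma>. \<forall>L. \<exists>Q\<in>alive L. \<gamma> \<in> sqbox N L Q}"

lemma Kset_sub: "Kset \<subseteq> {0..1} \<times> {0..1}"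
  unfolding Kset_def using sqbox_root[of N] by (auto dest: spec[of _ 0])

lemma compact_Kset: "compact Kset"
proof -
  have e: "Kset = (\<Inter>L. \<Union>Q\<in>alive L. sqbox N L Q)" unfolding Kset_def by auto
  have "closed Kset" unfolding e
    by (intro closed_INT ballI closed_UN finite_alive closed_sqbox)
  moreover have "bounded Kset"
    by (rule bounded_subset[OF _ Kset_sub]) (intro bounded_Times bounded_closed_interval)
  ultimately show ?thesis using compact_eq_bounded_closed by blast
qed

lemma pick_nonempty: "P \<in> alive L \<Longrightarrow> pick (Suc L) P \<noteq> {}"
  using pick_alive(2)[of P L] M1 by auto

lemma point_in:
  assumes Q: "Q \<in> alive L"
  shows "\<exists>\<gamma>\<in>Kset. \<gamma> \<in> sqbox N L Q"
proof -
  define ch where "ch = rec_nat Q (\<lambda>k R. SOME R'. R' \<in> pick (Suc (L+k)) R)"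
  have ch0: "ch 0 = Q" by (simp add: ch_def)
  have chS: "ch (Suc k) = (SOME R'. R' \<in> pick (Suc (L+k)) (ch k))" for k by (simp add: ch_def)
  have chA: "ch k \<in> alive (L + k) \<and> (k > 0 \<longrightarrow> anc N 1 (ch k) = ch (k - 1))" for k
  proof (induction k)
    case 0 then show ?case using Q ch0 by simp
  next
    case (Suc k)
    hence a: "ch k \<in> alive (L + k)" by simp
    have "ch (Suc k) \<in> pick (Suc (L+k)) (ch k)"
      unfolding chS using pick_nonempty[OF a] by (metis ex_in_conv someI_ex)
    moreover have "ch (Suc k) \<in> children N (ch k)"
      using calculation pick_alive(1)[OF a] unfolding goodch_def by blast
    ultimately show ?case using a anc_children[of N "ch (Suc k)" "ch k"] N2 by auto
  qed
  define F where "F k = sqbox N (L + k) (ch k)" for k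
  have dec: "F (Suc k) \<subseteq> F k" for k
  proof -
    have "F (Suc k) \<subseteq> sqbox N (L + k) (anc N 1 (ch (Suc k)))"
      unfolding F_def using sqbox_anc_subset[of N "L+k" 1 "ch (Suc k)"] N2 by simp
    thus ?thesis using chA[of "Suc k"] unfolding F_def by simp
  qed
  have "decseq F" by (rule decseq_SucI) (rule dec)
  hence "\<Inter> (range F) \<noteq> {}"
  proof (intro compact_nest)
    show "compact (F n)" for n unfolding F_def by (rule compact_sqbox)
    show "F n \<noteq> {}" for n unfolding F_def by (rule sqbox_nonempty)
    show "m \<le> n \<Longrightarrow> F n \<subseteq> F m" for m n using \<open>decseq F\<close> unfolding decseq_def by blast
  qed
  then obtain \<gamma> where g: "\<gamma> \<in> F k" for k by blast
  have "\<gamma> \<in> Kset"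
    unfolding Kset_def
  proof (intro CollectI allI)
    fix L'
    have "ch L' \<in> alive (L' + L)" using chA[of L'] by (simp add: add.commute)
    hence "anc N L (ch L') \<in> alive L'" by (rule alive_anc)
    moreover have "\<gamma> \<in> sqbox N L' (anc N L (ch L'))"
      using g[of L'] sqbox_anc_subset[of N L' L "ch L'"] N2 unfolding F_def
      by (auto simp: add.commute)
    ultimately show "\<exists>Q\<in>alive L'. \<gamma> \<in> sqbox N L' Q" by blast
  qed
  moreover have "\<gamma> \<in> sqbox N L Q" using g[of 0] ch0 unfolding F_def by simp
  ultimately show ?thesis by blast
qed

lemma Kset_nonempty: "Kset \<noteq> {}"
  using point_in[of "(0,0)" 0] by auto

end


lemma nat_interval_card:
  assumes "w \<ge> 0"
  shows "card {a::nat. lo \<le> real a \<and> real a \<le> lo + w} \<le> nat \<lfloor>w\<rfloor> + 1"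
proof -
  define n0 where "n0 = nat \<lceil>lo\<rceil>"
  have n0: "real n0 \<ge> lo" unfolding n0_def by linarith
  have sub: "{a::nat. lo \<le> real a \<and> real a \<le> lo + w} \<subseteq> {n0 .. n0 + nat \<lfloor>w\<rfloor>}"
  proof
    fix a assume a: "a \<in> {a::nat. lo \<le> real a \<and> real a \<le> lo + w}"
    have "n0 \<le> a" using a unfolding n0_def by (auto simp: nat_le_iff ceiling_le_iff)
    moreover have "real a - real n0 \<le> w" using a n0 by auto
    hence "int a - int n0 \<le> \<lfloor>w\<rfloor>" by (simp add: le_floor_iff)
    ultimately show "a \<in> {n0 .. n0 + nat \<lfloor>w\<rfloor>}" by auto
  qed
  have "card {a::nat. lo \<le> real a \<and> real a \<le> lo + w} \<le> card {n0 .. n0 + nat \<lfloor>w\<rfloor>}"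
    by (rule card_mono[OF _ sub]) simp
  thus ?thesis by simp
qed

lemma nat_le_ceil: "real x \<le> r \<Longrightarrow> x \<le> nat \<lceil>r\<rceil>"
proof -
  assume "real x \<le> r"
  hence "\<lceil>real x\<rceil> \<le> \<lceil>r\<rceil>" by (rule ceiling_mono)
  hence "int x \<le> \<lceil>r\<rceil>" by simp
  thus ?thesis by linarith
qed

lemma grid_meet_card:
  assumes N1: "N \<ge> 1" and V: "v0 \<in> V" and dV: "\<And>v w. v \<in> V \<Longrightarrow> w \<in> V \<Longrightarrow> dist v w \<le> d"
    and d0: "0 \<le> d" and dN: "d \<le> real N / real N ^ L"
  shows "finite {P. sqbox N L P \<inter> V \<noteq> {}} \<and> card {P. sqbox N L P \<inter> V \<noteq> {}} \<le> (2 * N + 2) ^ 2"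
proof -
  define T where "T = real N ^ L"
  have T0: "T > 0" using N1 by (simp add: T_def)
  have Td: "T * d \<le> real N" using dN T0 unfolding T_def[symmetric] by (simp add: field_simps)
  define w where "w = 2 * T * d + 1"
  have w0: "w \<ge> 0" using T0 d0 by (simp add: w_def)
  have wfl: "nat \<lfloor>w\<rfloor> + 1 \<le> 2 * N + 2"
  proof -
    have "w \<le> real (2 * N + 1)" using Td by (simp add: w_def)
    hence "\<lfloor>w\<rfloor> \<le> int (2 * N + 1)" by (metis floor_mono floor_of_nat)
    thus ?thesis by linarith
  qed
  define A where "A z = {a::nat. T * (z - d) - 1 \<le> real a \<and> real a \<le> T * (z - d) - 1 + w}" for z
  have cA: "card (A z) \<le> 2 * N + 2" for z
    using nat_interval_card[OF w0, of "T * (z - d) - 1"] wfl unfolding A_def by linarith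
  have fA: "finite (A z)" for z
  proof -
    have "A z \<subseteq> {..nat \<lceil>T * (z - d) - 1 + w\<rceil>}" unfolding A_def by (auto intro: nat_le_ceil)
    thus ?thesis by (rule finite_subset) simp
  qed
  have coord: "a \<in> A z" if "real a / T \<le> y" "y \<le> (real a + 1) / T" "\<bar>y - z\<bar> \<le> d" for a y z
  proof -
    have "real a \<le> T * y" "T * y \<le> real a + 1" using that(1,2) T0 by (auto simp: field_simps)
    moreover have "T * (y - z) \<le> T * d" "T * (z - y) \<le> T * d"
      using that(3) T0 by (intro mult_left_mono; linarith)+
    ultimately show ?thesis unfolding A_def w_def by (auto simp: algebra_simps)
  qed
  have sub: "{P. sqbox N L P \<inter> V \<noteq> {}} \<subseteq> A (fst v0) \<times> A (snd v0)"
  proof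
    fix P assume "P \<in> {P. sqbox N L P \<inter> V \<noteq> {}}"
    then obtain p where p: "p \<in> sqbox N L P" "p \<in> V" by auto
    have dp: "dist p v0 \<le> d" using dV p(2) V by auto
    have "\<bar>fst p - fst v0\<bar> \<le> d" using dist_fst_le[of p v0] dp by (simp add: dist_real_def)
    moreover have "\<bar>snd p - snd v0\<bar> \<le> d" using dist_snd_le[of p v0] dp by (simp add: dist_real_def)
    ultimately show "P \<in> A (fst v0) \<times> A (snd v0)"
      using p(1) coord unfolding sqbox_def T_def[symmetric] by (cases P) (auto simp: mem_Times_iff)
  qed
  have "card {P. sqbox N L P \<inter> V \<noteq> {}} \<le> card (A (fst v0) \<times> A (snd v0))"
    by (rule card_mono[OF _ sub]) (simp add: fA)
  also have "\<dots> = card (A (fst v0)) * card (A (snd v0))" by (simp add: card_cartesian_product)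
  also have "\<dots> \<le> (2 * N + 2) * (2 * N + 2)" using cA by (intro mult_mono) auto
  finally have "card {P. sqbox N L P \<inter> V \<noteq> {}} \<le> (2 * N + 2) ^ 2" by (simp add: power2_eq_square)
  moreover have "finite {P. sqbox N L P \<inter> V \<noteq> {}}" by (rule finite_subset[OF sub]) (simp add: fA)
  ultimately show ?thesis by blast
qed


lemma pow_powr: "(x::real) > 0 \<Longrightarrow> (x ^ n) powr s = (x powr s) ^ n"
  by (metis powr_powr powr_power powr_realpow powr_gt_zero mult.commute)

context cantor
begin

lemma finite_cover:
  assumes s0: "s > 0" and NM: "real N powr s \<le> real M" and fF: "finite F"
    and Vne: "\<And>k. k \<in> F \<Longrightarrow> V k \<noteq> {}" and Vb: "\<And>k. k \<in> F \<Longrightarrow> bounded (V k)"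
    and Vd: "\<And>k. k \<in> F \<Longrightarrow> 0 < diameter (V k) \<and> diameter (V k) \<le> 1"
    and cov: "Kset \<subseteq> (\<Union>k\<in>F. V k)"
  shows "1 \<le> real ((2*N+2)^2) * (\<Sum>k\<in>F. diameter (V k) powr s)"
proof -
  define C where "C = (2*N+2)^2"
  define d where "d k = diameter (V k)" for k
  have Nr: "real N \<ge> 2" using N2 by simp
  have exL: "\<exists>L. 1 / real N ^ L \<le> d k" if "k \<in> F" for k
  proof -
    have "\<exists>n. (1 / real N) ^ n < d k" using Vd[OF that] Nr by (intro real_arch_pow_inv) (auto simp: d_def)
    thus ?thesis by (auto simp: power_one_over intro: less_imp_le)
  qed
  define Lk where "Lk k = (LEAST L. 1 / real N ^ L \<le> d k)" for k
  have Lk1: "1 / real N ^ Lk k \<le> d k" if "k \<in> F" for k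
    unfolding Lk_def using exL[OF that] by (rule LeastI_ex)
  have Lk2: "d k \<le> real N / real N ^ Lk k" if "k \<in> F" for k
  proof (cases "Lk k")
    case 0 then show ?thesis using Vd[OF that] Nr by (simp add: d_def)
  next
    case (Suc l)
    have "\<not> (1 / real N ^ l \<le> d k)"
      using not_less_Least[of l "\<lambda>L. 1 / real N ^ L \<le> d k"] Suc unfolding Lk_def by simp
    hence "d k < 1 / real N ^ l" by simp
    also have "1 / real N ^ l = real N / real N ^ Lk k" using Suc Nr by simp
    finally show ?thesis by simp
  qed
  define S where "S k = {P \<in> alive (Lk k). sqbox N (Lk k) P \<inter> V k \<noteq> {}}" for k
  have cS: "card (S k) \<le> C" if kF: "k \<in> F" for k
  proof -
    obtain v0 where v0: "v0 \<in> V k" using Vne[OF kF] by blast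
    have "finite {P. sqbox N (Lk k) P \<inter> V k \<noteq> {}} \<and> card {P. sqbox N (Lk k) P \<inter> V k \<noteq> {}} \<le> C"
      unfolding C_def
    proof (rule grid_meet_card[OF _ v0])
      show "1 \<le> N" using N2 by simp
      show "dist v w \<le> d k" if "v \<in> V k" "w \<in> V k" for v w
        unfolding d_def using diameter_bounded_bound[OF Vb[OF \<open>k \<in> F\<close>] that] .
      show "0 \<le> d k" using Vd[OF kF] by (simp add: d_def)
      show "d k \<le> real N / real N ^ Lk k" by (rule Lk2[OF kF])
    qed
    moreover have "S k \<subseteq> {P. sqbox N (Lk k) P \<inter> V k \<noteq> {}}" unfolding S_def by auto
    ultimately show ?thesis using card_mono le_trans by metis
  qed
  have fS: "finite (S k)" for k
    using finite_alive[of "Lk k"] unfolding S_def by simp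
  have Fne: "F \<noteq> {}" using cov Kset_nonempty by auto
  define Ls where "Ls = Max (Lk ` F)"
  have LkLs: "Lk k \<le> Ls" if "k \<in> F" for k unfolding Ls_def using fF that by simp
  define D where "D k P = {Q \<in> alive (Lk k + (Ls - Lk k)). anc N (Ls - Lk k) Q = P}" for k P
  have cD: "card (D k P) \<le> M ^ (Ls - Lk k)" for k P unfolding D_def by (rule desc_card)
  have fD: "finite (D k P)" for k P unfolding D_def using finite_alive by simp
  have covA: "alive Ls \<subseteq> (\<Union>k\<in>F. \<Union>P\<in>S k. D k P)"
  proof
    fix Q assume Q: "Q \<in> alive Ls"
    obtain \<gamma> where g: "\<gamma> \<in> Kset" "\<gamma> \<in> sqbox N Ls Q" using point_in[OF Q] by blast
    obtain k where k: "k \<in> F" "\<gamma> \<in> V k" using cov g(1) by blast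
    define j where "j = Ls - Lk k"
    have Ls_eq: "Ls = Lk k + j" using LkLs[OF k(1)] unfolding j_def by simp
    have QA: "Q \<in> alive (Lk k + j)" using Q Ls_eq by simp
    have "anc N j Q \<in> alive (Lk k)" using alive_anc[OF QA] .
    moreover have "\<gamma> \<in> sqbox N (Lk k) (anc N j Q)"
      using g(2) sqbox_anc_subset[of N "Lk k" j Q] N2 Ls_eq by auto
    ultimately have "anc N j Q \<in> S k" using k(2) unfolding S_def by blast
    moreover have "Q \<in> D k (anc N j Q)" unfolding D_def j_def[symmetric] using QA by simp
    ultimately show "Q \<in> (\<Union>k\<in>F. \<Union>P\<in>S k. D k P)" using k(1) by blast
  qed
  have "M ^ Ls = card (alive Ls)" by (simp add: card_alive)
  also have "\<dots> \<le> card (\<Union>k\<in>F. \<Union>P\<in>S k. D k P)"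
    by (rule card_mono[OF _ covA]) (use fF fS fD in blast)
  also have "\<dots> \<le> (\<Sum>k\<in>F. card (\<Union>P\<in>S k. D k P))" by (rule card_UN_le[OF fF])
  also have "\<dots> \<le> (\<Sum>k\<in>F. \<Sum>P\<in>S k. card (D k P))"
    by (intro sum_mono card_UN_le fS)
  also have "\<dots> \<le> (\<Sum>k\<in>F. \<Sum>P\<in>S k. M ^ (Ls - Lk k))"
    by (intro sum_mono cD)
  also have "\<dots> = (\<Sum>k\<in>F. card (S k) * M ^ (Ls - Lk k))" by simp
  also have "\<dots> \<le> (\<Sum>k\<in>F. C * M ^ (Ls - Lk k))"
    by (intro sum_mono mult_right_mono cS) auto
  finally have ineq: "M ^ Ls \<le> (\<Sum>k\<in>F. C * M ^ (Ls - Lk k))" .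
  have Mr: "real M > 0" using M1 by simp
  have "real (M ^ Ls) \<le> real (\<Sum>k\<in>F. C * M ^ (Ls - Lk k))"
    using ineq by (simp only: of_nat_le_iff)
  hence "real M ^ Ls \<le> (\<Sum>k\<in>F. real C * real M ^ (Ls - Lk k))"
    by (simp only: of_nat_sum of_nat_mult of_nat_power)
  also have "\<dots> = (\<Sum>k\<in>F. real C * (real M ^ Ls / real M ^ Lk k))"
    using LkLs Mr by (intro sum.cong refl) (simp add: power_diff)
  also have "\<dots> = real M ^ Ls * (\<Sum>k\<in>F. real C * (1 / real M ^ Lk k))"
    unfolding sum_distrib_left by (intro sum.cong refl) simp
  finally have "real M ^ Ls * 1 \<le> real M ^ Ls * (\<Sum>k\<in>F. real C * (1 / real M ^ Lk k))"
    by simp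
  hence "1 \<le> (\<Sum>k\<in>F. real C * (1 / real M ^ Lk k))"
    using Mr by (subst (asm) mult_le_cancel_left_pos) auto
  also have "\<dots> \<le> (\<Sum>k\<in>F. real C * d k powr s)"
  proof (intro sum_mono mult_left_mono)
    fix k assume k: "k \<in> F"
    have Npos: "real N > 0" using Nr by simp
    have "1 / real M ^ Lk k \<le> 1 / (real N powr s) ^ Lk k"
      using NM Npos Mr by (intro divide_left_mono power_mono) (auto intro!: mult_pos_pos)
    also have "\<dots> = (1 / real N ^ Lk k) powr s"
      using Npos by (simp add: powr_divide pow_powr)
    also have "\<dots> \<le> d k powr s" using Lk1[OF k] s0 Npos by (intro powr_mono2) auto
    finally show "1 / real M ^ Lk k \<le> d k powr s" .
  qed simp
  finally show ?thesis unfolding C_def d_def by (simp add: sum_distrib_left)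
qed

end


lemma max_powr_le: "(a::real) \<ge> 0 \<Longrightarrow> b \<ge> 0 \<Longrightarrow> s > 0 \<Longrightarrow> max a b powr s \<le> a powr s + b powr s"
  by (cases "a \<le> b") (auto simp: max_def)

lemma ball_union_props:
  fixes U :: "(real \<times> real) set"
  assumes U: "bounded U" "U \<noteq> {}" and r: "r > 0" "diameter U \<le> r"
  defines "V \<equiv> (\<Union>u\<in>U. ball u r)"
  shows "open V" "U \<subseteq> V" "V \<noteq> {}" "bounded V" "0 < diameter V" "diameter V \<le> 3 * r"
proof -
  show "open V" unfolding V_def by auto
  show "U \<subseteq> V" unfolding V_def using r by auto
  then show "V \<noteq> {}" using U by auto
  obtain u0 where u0: "u0 \<in> U" using U by auto
  have dU: "dist u u' \<le> r" if "u \<in> U" "u' \<in> U" for u u'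
    using diameter_bounded_bound[OF U(1) that] r by linarith
  have "V \<subseteq> cball u0 (2 * r)"
  proof
    fix v assume "v \<in> V"
    then obtain u where u: "u \<in> U" "dist u v < r" unfolding V_def by auto
    have "dist u0 v \<le> dist u0 u + dist u v" by (rule dist_triangle)
    thus "v \<in> cball u0 (2 * r)" using dU[OF u0 u(1)] u(2) by simp
  qed
  thus bV: "bounded V" using bounded_cball bounded_subset by blast
  have "diameter V \<le> 3 * r"
  proof (rule diameter_le)
    show "V \<noteq> {} \<or> 0 \<le> 3 * r" using r by simp
    fix v w assume "v \<in> V" "w \<in> V"
    then obtain u u' where uu: "u \<in> U" "dist u v < r" "u' \<in> U" "dist u' w < r" unfolding V_def by auto
    have t1: "dist v w \<le> dist v u + dist u w" by (rule dist_triangle)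
    have t2: "dist u w \<le> dist u u' + dist u' w" by (rule dist_triangle)
    have "dist v w \<le> dist v u + dist u u' + dist u' w" using t1 t2 by linarith
    also have "\<dots> \<le> 3 * r" using uu dU[OF uu(1) uu(3)] by (simp add: dist_commute)
    finally show "norm (v - w) \<le> 3 * r" by (simp add: dist_norm)
  qed
  thus "diameter V \<le> 3 * r" .
  have p1: "u0 \<in> V" unfolding V_def by (rule UN_I[OF u0]) (simp add: r)
  have dd: "dist u0 (u0 + (r/2, 0)) = r / 2" using r by (simp add: dist_norm)
  have p2: "u0 + (r/2, 0) \<in> V" unfolding V_def
  proof (rule UN_I[OF u0])
    show "u0 + (r / 2, 0) \<in> ball u0 r" using dd r by simp
  qed
  have "dist u0 (u0 + (r/2, 0)) \<le> diameter V" by (rule diameter_bounded_bound[OF bV p1 p2])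
  thus "0 < diameter V" using r dd by simp
qed


context cantor
begin

lemma cover_lower:
  fixes U :: "nat \<Rightarrow> (real \<times> real) set"
  assumes s0: "0 < s" "s \<le> 2" and NM: "real N powr s \<le> real M"
    and KA: "Kset \<subseteq> A"
    and cov: "A \<subseteq> (\<Union>n. U n)" and Ub: "\<And>n. bounded (U n)" and Ud: "\<And>n. diameter (U n) \<le> 1/3"
  shows "ennreal (1 / (18 * real ((2*N+2)^2))) \<le> cover_sum s U"
proof -
  define C where "C = real ((2*N+2)^2)"
  have C1: "C \<ge> 1" unfolding C_def by simp
  define \<theta> where "\<theta> = 1 / (18 * C)"
  have th0: "0 < \<theta>" using C1 by (simp add: \<theta>_def)
  have th1: "\<theta> \<le> 1/18" using C1 by (simp add: \<theta>_def field_simps)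
  define \<rho> where "\<rho> n = (\<theta> / 2 ^ Suc n) powr (1/s)" for n
  have rho_pos: "\<rho> n > 0" for n unfolding \<rho>_def using th0 by simp
  have rho_s: "\<rho> n powr s = \<theta> / 2 ^ Suc n" for n
    unfolding \<rho>_def using th0 s0 by (simp add: powr_powr)
  have rho_le: "\<rho> n \<le> 1/3" for n
  proof (rule ccontr)
    assume "\<not> \<rho> n \<le> 1/3"
    hence "(1/3) powr s < \<rho> n powr s" using s0 by (intro powr_less_mono2) auto
    moreover have "(1/3::real) powr 2 \<le> (1/3) powr s" using s0 by (intro powr_mono') auto
    moreover have "(1/3::real) powr 2 = 1/9" by (simp add: powr_numeral power2_eq_square)
    moreover have "\<theta> / 2 ^ Suc n \<le> \<theta>"
    proof -
      have "(1::real) \<le> 2 ^ Suc n" by (rule one_le_power) simp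
      hence "\<theta> * 1 \<le> \<theta> * 2 ^ Suc n" using th0 by (intro mult_left_mono) auto
      thus ?thesis by (simp add: divide_le_eq)
    qed
    ultimately show False using rho_s[of n] th1 by linarith
  qed
  define r where "r n = max (diameter (U n)) (\<rho> n)" for n
  have r0: "r n > 0" for n unfolding r_def using rho_pos[of n] by simp
  have r1: "r n \<le> 1/3" for n unfolding r_def using rho_le[of n] Ud[of n] by simp
  have r2: "diameter (U n) \<le> r n" for n unfolding r_def by simp
  define V where "V n = (\<Union>u\<in>U n. ball u (r n))" for n
  have Vopen: "open (V n)" for n unfolding V_def by auto
  have KV: "Kset \<subseteq> \<Union> (V ` UNIV)"
  proof
    fix x assume "x \<in> Kset"
    then obtain n where "x \<in> U n" using KA cov by blast
    hence "x \<in> V n" unfolding V_def using r0[of n] by (intro UN_I[of x]) auto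
    thus "x \<in> \<Union> (V ` UNIV)" by blast
  qed
  obtain F' where F': "finite F'" "Kset \<subseteq> \<Union> (V ` F')"
  proof -
    have "\<And>T. T \<in> UNIV \<Longrightarrow> open (V T)" using Vopen by blast
    from compactE_image[OF compact_Kset this KV] show ?thesis using that by metis
  qed
  define F where "F = {n \<in> F'. U n \<noteq> {}}"
  have fF: "finite F" using F'(1) unfolding F_def by simp
  have KF: "Kset \<subseteq> (\<Union>k\<in>F. V k)"
  proof
    fix x assume "x \<in> Kset"
    then obtain n where n: "n \<in> F'" "x \<in> V n" using F'(2) by blast
    hence "U n \<noteq> {}" unfolding V_def by auto
    hence "n \<in> F" using n(1) unfolding F_def by simp
    thus "x \<in> (\<Union>k\<in>F. V k)" using n(2) by blast
  qed
  have Vp: "V k \<noteq> {} \<and> bounded (V k) \<and> 0 < diameter (V k) \<and> diameter (V k) \<le> 3 * r k"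
    if "k \<in> F" for k
  proof -
    have "U k \<noteq> {}" using that unfolding F_def by simp
    from ball_union_props[OF Ub[of k] this r0[of k] r2[of k]]
    show ?thesis unfolding V_def by blast
  qed
  have "1 \<le> C * (\<Sum>k\<in>F. diameter (V k) powr s)"
    unfolding C_def
  proof (rule finite_cover[OF s0(1) NM fF])
    show "V k \<noteq> {}" "bounded (V k)" if "k \<in> F" for k using Vp[OF that] by auto
    show "0 < diameter (V k) \<and> diameter (V k) \<le> 1" if "k \<in> F" for k
      using Vp[OF that] r1[of k] by auto
    show "Kset \<subseteq> (\<Union>k\<in>F. V k)" by (rule KF)
  qed
  also have "\<dots> \<le> C * (\<Sum>k\<in>F. 9 * (diameter (U k) powr s + \<rho> k powr s))"
  proof (intro mult_left_mono sum_mono)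
    fix k assume k: "k \<in> F"
    have "diameter (V k) powr s \<le> (3 * r k) powr s"
      using Vp[OF k] s0 by (intro powr_mono2) auto
    also have "\<dots> = 3 powr s * r k powr s" using r0[of k] by (simp add: powr_mult)
    also have "\<dots> \<le> 9 * r k powr s"
    proof (rule mult_right_mono)
      have "(3::real) powr s \<le> 3 powr 2" using s0 by (intro powr_mono) auto
      thus "(3::real) powr s \<le> 9" by (simp add: powr_numeral)
    qed simp
    also have "\<dots> \<le> 9 * (diameter (U k) powr s + \<rho> k powr s)"
      unfolding r_def using max_powr_le[of "diameter (U k)" "\<rho> k" s] s0 rho_pos[of k]
      by (simp add: diameter_ge_0[OF Ub[of k]])
    finally show "diameter (V k) powr s \<le> 9 * (diameter (U k) powr s + \<rho> k powr s)" .
  qed (use C1 in simp)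
  also have "\<dots> = 9 * C * ((\<Sum>k\<in>F. diameter (U k) powr s) + (\<Sum>k\<in>F. \<rho> k powr s))"
    by (simp add: sum.distrib sum_distrib_left)
  also have "(\<Sum>k\<in>F. \<rho> k powr s) \<le> \<theta>"
  proof -
    have sm: "(\<lambda>n. \<theta> * (1/2) ^ Suc n) sums (\<theta> * 1)"
      by (rule sums_mult[OF power_half_series])
    have "(\<Sum>k\<in>F. \<rho> k powr s) = (\<Sum>k\<in>F. \<theta> * (1/2) ^ Suc k)"
      by (simp add: rho_s power_one_over)
    also have "\<dots> \<le> (\<Sum>n. \<theta> * (1/2) ^ Suc n)"
      by (rule sum_le_suminf[OF sums_summable[OF sm] fF]) (use th0 in simp)
    also have "\<dots> = \<theta>" using sums_unique[OF sm] by simp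
    finally show ?thesis .
  qed
  hence "9 * C * ((\<Sum>k\<in>F. diameter (U k) powr s) + (\<Sum>k\<in>F. \<rho> k powr s))
      \<le> 9 * C * ((\<Sum>k\<in>F. diameter (U k) powr s) + \<theta>)" using C1 by simp
  finally have main: "1 \<le> 9 * C * ((\<Sum>k\<in>F. diameter (U k) powr s) + \<theta>)" .
  have "\<theta> \<le> (\<Sum>k\<in>F. diameter (U k) powr s)"
  proof -
    have "1 / (9 * C) \<le> (\<Sum>k\<in>F. diameter (U k) powr s) + \<theta>"
      using main C1 by (simp add: field_simps)
    moreover have "1 / (9 * C) = 2 * \<theta>" unfolding \<theta>_def using C1 by (simp add: field_simps)
    ultimately show ?thesis by linarith
  qed
  hence "ennreal \<theta> \<le> ennreal (\<Sum>k\<in>F. diameter (U k) powr s)" by (rule ennreal_leI)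
  also have "\<dots> = (\<Sum>k\<in>F. ennreal (diameter (U k) powr s))"
    by (rule sum_ennreal[symmetric]) simp
  also have "\<dots> = (\<Sum>k\<in>F. (if U k = {} then 0 else if s = 0 then 1 else ennreal (diameter (U k) powr s)))"
    using s0 unfolding F_def by (intro sum.cong) auto
  also have "\<dots> \<le> cover_sum s U"
    unfolding cover_sum_def by (rule sum_le_suminf[OF summableI fF]) simp
  finally show ?thesis unfolding \<theta>_def C_def .
qed

lemma hausdorff_pos:
  assumes s0: "0 < s" "s \<le> 2" and NM: "real N powr s \<le> real M" and KA: "Kset \<subseteq> A"
  shows "hausdorff_measure s A \<noteq> 0"
proof -
  define \<kappa> where "\<kappa> = ennreal (1 / (18 * real ((2*N+2)^2)))"
  have k0: "\<kappa> > 0" unfolding \<kappa>_def by simp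
  have "\<kappa> \<le> hausdorff_pre s (1/3) A"
    unfolding hausdorff_pre_def
  proof (rule INF_greatest)
    fix U :: "nat \<Rightarrow> (real \<times> real) set" assume "U \<in> {U. A \<subseteq> (\<Union>n. U n) \<and> (\<forall>n. bounded (U n) \<and> diameter (U n) \<le> 1/3)}"
    thus "\<kappa> \<le> cover_sum s U" unfolding \<kappa>_def using cover_lower[OF s0 NM KA] by auto
  qed
  also have "\<dots> \<le> hausdorff_measure s A"
    unfolding hausdorff_measure_def by (rule SUP_upper) simp
  finally show ?thesis using k0 by auto
qed

end


lemma dist_int_nonneg: "dist_int y \<ge> 0" by (simp add: dist_int_def)

lemma dist_int_half: "dist_int y \<le> 1/2"
  unfolding dist_int_def using of_int_round_abs_le[of y] by (simp add: abs_minus_commute)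

lemma dist_int_le_int: "dist_int y \<le> \<bar>y - of_int k\<bar>"
proof (cases "k = round y")
  case True then show ?thesis by (simp add: dist_int_def)
next
  case False
  hence "1 \<le> \<bar>k - round y\<bar>" by simp
  hence "(1::real) \<le> of_int \<bar>k - round y\<bar>" by (simp only: of_int_1_le_iff)
  hence "\<bar>of_int k - of_int (round y)\<bar> \<ge> (1::real)" by simp
  moreover have "dist_int y \<le> 1/2" by (rule dist_int_half)
  ultimately show ?thesis unfolding dist_int_def by linarith
qed

lemma dist_int_minus: "dist_int (- y) = dist_int y"
proof -
  have "dist_int (- y) \<le> dist_int y"
    using dist_int_le_int[of "- y" "- round y"] by (simp add: dist_int_def abs_minus_commute)
  moreover have "dist_int y \<le> dist_int (- y)"
    using dist_int_le_int[of "y" "- round (- y)"] by (simp add: dist_int_def abs_minus_commute)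
  ultimately show ?thesis by simp
qed

lemma dist_int_add: "dist_int (a + b) \<le> dist_int a + dist_int b"
proof -
  have "dist_int (a + b) \<le> \<bar>a + b - of_int (round a + round b)\<bar>" by (rule dist_int_le_int)
  also have "\<dots> \<le> dist_int a + dist_int b" unfolding dist_int_def by simp
  finally show ?thesis .
qed

lemma dist_int_abs: "dist_int y \<le> \<bar>y\<bar>"
  using dist_int_le_int[of y 0] by simp


lemma grid_dist_card:
  assumes N1: "N \<ge> 1" and r0: "0 \<le> r" and rT: "r \<le> 1 / (2 * real N ^ L)"
  shows "card {\<alpha>::nat. \<alpha> < N^L \<and> (\<exists>y. real \<alpha> / real N ^ L \<le> y \<and> y \<le> (real \<alpha> + 1) / real N ^ L
            \<and> dist_int (t - y) \<le> r)} \<le> 3"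
proof -
  define T where "T = real N ^ L"
  have T0: "T > 0" using N1 by (simp add: T_def)
  have rT': "r * T \<le> 1/2" using rT T0 unfolding T_def[symmetric] by (simp add: field_simps)
  define w0 where "w0 = \<lceil>t * T - 3/2\<rceil>"
  let ?S = "{\<alpha>::nat. \<alpha> < N^L \<and> (\<exists>y. real \<alpha> / real N ^ L \<le> y \<and> y \<le> (real \<alpha> + 1) / real N ^ L
            \<and> dist_int (t - y) \<le> r)}"
  have sub: "?S \<subseteq> (\<lambda>w. nat (w mod int (N^L))) ` {w0, w0+1, w0+2}"
  proof
    fix \<alpha> assume "\<alpha> \<in> ?S"
    then obtain y where a: "\<alpha> < N^L" "real \<alpha> / T \<le> y" "y \<le> (real \<alpha> + 1) / T" "dist_int (t - y) \<le> r"
      unfolding T_def by auto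
    define k where "k = round (t - y)"
    have kk: "\<bar>t - y - of_int k\<bar> \<le> r" using a(4) unfolding dist_int_def k_def .
    define w where "w = int \<alpha> + k * int (N^L)"
    have wr: "real_of_int w = real \<alpha> + of_int k * T" unfolding w_def T_def by simp
    have y1: "real \<alpha> \<le> y * T" using a(2) T0 by (simp add: field_simps)
    have y2: "y * T \<le> real \<alpha> + 1" using a(3) T0 by (simp add: field_simps)
    have y3: "(t - of_int k - r) * T \<le> y * T" using kk T0 by (intro mult_right_mono) auto
    have y4: "y * T \<le> (t - of_int k + r) * T" using kk T0 by (intro mult_right_mono) auto
    have lo: "t * T - 3/2 \<le> real_of_int w" using wr y2 y3 rT' by (simp add: algebra_simps)
    have hi: "real_of_int w \<le> t * T + 1/2" using wr y1 y4 rT' by (simp add: algebra_simps)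
    have "w0 \<le> w" unfolding w0_def using lo by (simp add: ceiling_le_iff)
    moreover have "w \<le> w0 + 2"
    proof -
      have "t * T - 3/2 \<le> real_of_int w0" unfolding w0_def by simp
      hence "real_of_int w \<le> real_of_int (w0 + 2)" using hi by simp
      thus ?thesis by (simp only: of_int_le_iff)
    qed
    ultimately have "w \<in> {w0, w0+1, w0+2}" by auto
    moreover have "nat (w mod int (N^L)) = \<alpha>"
    proof -
      have "w mod int (N^L) = int \<alpha> mod int (N^L)" unfolding w_def by simp
      also have "\<dots> = int \<alpha>" using a(1) by (simp add: zmod_int[symmetric])
      finally show ?thesis by simp
    qed
    ultimately show "\<alpha> \<in> (\<lambda>w. nat (w mod int (N^L))) ` {w0, w0+1, w0+2}" by force
  qed
  have "card ?S \<le> card ((\<lambda>w. nat (w mod int (N^L))) ` {w0, w0+1, w0+2})"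
    by (rule card_mono[OF _ sub]) simp
  also have "\<dots> \<le> card {w0, w0+1, w0+2}" by (rule card_image_le) simp
  also have "\<dots> \<le> 3" by (simp add: card_insert_if)
  finally show ?thesis .
qed


definition Rset :: "real \<Rightarrow> real \<Rightarrow> real \<times> real \<Rightarrow> real \<Rightarrow> int \<Rightarrow> (real \<times> real) set" where
  "Rset i j x c q = {\<gamma>. dist_int (of_int q * fst x - fst \<gamma>) \<le> (c / \<bar>of_int q\<bar>) powr i \<and>
                        dist_int (of_int q * snd x - snd \<gamma>) \<le> (c / \<bar>of_int q\<bar>) powr j}"

definition Qset :: "real \<Rightarrow> real \<Rightarrow> real \<Rightarrow> nat \<Rightarrow> nat \<Rightarrow> int set" where
  "Qset i j c N L = {q::int. q \<noteq> 0 \<and> 1 / (2 * real N ^ Suc L) < (c / \<bar>of_int q\<bar>) powr (max i j)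
                       \<and> (c / \<bar>of_int q\<bar>) powr (max i j) \<le> 1 / (2 * real N ^ L)}"

definition Gp :: "real \<Rightarrow> real \<Rightarrow> real \<times> real \<Rightarrow> real \<Rightarrow> nat \<Rightarrow> nat \<Rightarrow> nat \<times> nat \<Rightarrow> bool" where
  "Gp i j x c N L P = (\<forall>q\<in>Qset i j c N L. sqbox N L P \<inter> Rset i j x c q = {})"

lemma powr_inv_less:
  fixes a d e :: real
  assumes "0 < e" "0 < a" "a powr e < d"
  shows "a < d powr (1/e)"
proof -
  have "(a powr e) powr (1/e) < d powr (1/e)" by (rule powr_less_mono2) (use assms in auto)
  moreover have "(a powr e) powr (1/e) = a" using assms by (simp add: powr_powr)
  ultimately show ?thesis by simp
qed

lemma wpow_gt:
  fixes y e b :: real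
  assumes "wpow y e > b" "b > 0" "e \<ge> 0"
  shows "e > 0 \<and> dist_int y > b powr e"
proof -
  have e0: "e \<noteq> 0" using assms unfolding wpow_def by auto
  hence w: "dist_int y powr (1/e) > b" using assms unfolding wpow_def by simp
  have d0: "dist_int y > 0" using w assms(2) dist_int_nonneg[of y] by (cases "dist_int y = 0") auto
  have "b powr e < (dist_int y powr (1/e)) powr e" using w assms e0 by (intro powr_less_mono2) auto
  also have "\<dots> = dist_int y" using d0 e0 by (simp add: powr_powr)
  finally show ?thesis using e0 assms(3) by simp
qed

lemma avoid:
  assumes i0: "i \<ge> 0" and j0: "j \<ge> 0" and ij: "i + j = 1" and c0: "c > 0" and q0: "q \<noteq> 0"
    and g: "\<gamma> \<notin> Rset i j x c q"
  shows "max (wpow (of_int q * fst x - fst \<gamma>) i) (wpow (of_int q * snd x - snd \<gamma>) j) > c / \<bar>of_int q\<bar>"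
proof -
  have a0: "c / \<bar>of_int q\<bar> > 0" using c0 q0 by simp
  have key: "wpow y e > c / \<bar>of_int q\<bar>" if "dist_int y > (c / \<bar>of_int q\<bar>) powr e" "e \<ge> 0" for y e
  proof (cases "e = 0")
    case True
    thus ?thesis using that dist_int_half[of y] c0 q0 by simp
  next
    case False
    hence "e > 0" using that(2) by simp
    hence "c / \<bar>of_int q\<bar> < dist_int y powr (1/e)" using powr_inv_less a0 that(1) by blast
    thus ?thesis unfolding wpow_def using False by simp
  qed
  from g have "dist_int (of_int q * fst x - fst \<gamma>) > (c / \<bar>of_int q\<bar>) powr i \<or>
               dist_int (of_int q * snd x - snd \<gamma>) > (c / \<bar>of_int q\<bar>) powr j"
    unfolding Rset_def by auto
  thus ?thesis using key i0 j0 by (auto simp: less_max_iff_disj)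
qed


locale nt_setting =
  fixes i j :: real and x :: "real \<times> real" and c0 c :: real and N :: nat
  assumes i0: "i \<ge> 0" and j0: "j \<ge> 0" and ij: "i + j = 1"
    and c00: "c0 > 0" and c01: "c0 \<le> 1"
    and bad: "\<And>p::nat. p \<ge> 1 \<Longrightarrow> max (wpow (real p * fst x) i) (wpow (real p * snd x) j) > c0 / real p"
    and N2: "N \<ge> 2" and c_pos: "c > 0"
    and C1: "c powr (max i j) \<le> 1 / (2 * real N)"
    and C2i: "i > 0 \<Longrightarrow> (2 * real N ^ 2 * c / c0) powr i \<le> 1/4"
    and C2j: "j > 0 \<Longrightarrow> (2 * real N ^ 2 * c / c0) powr j \<le> 1/4"
    and C3: "(c0 / (2 * c)) powr (max i j) \<ge> 4 * real N ^ 2"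
begin

abbreviation "m \<equiv> max i j"

lemma m_half: "m \<ge> 1/2" using i0 j0 ij by linarith

lemma Npos: "real N \<ge> 2" using N2 by simp

lemma N2_powr: "(real N ^ 2) powr m \<ge> real N"
proof -
  have e1: "real N ^ 2 = real N powr 2" using Npos by (simp add: powr_numeral)
  have "(real N ^ 2) powr m = real N powr (2 * m)" unfolding e1 by (rule powr_powr)
  also have "\<dots> \<ge> real N powr 1" using Npos m_half by (intro powr_mono) auto
  finally show ?thesis using Npos by simp
qed

lemma coord_bound:
  fixes q q' :: int and z g g' e :: real
  assumes e: "e = i \<or> e = j" "0 < e"
    and qQ: "q \<in> Qset i j c N (Suc L)" and qQ': "q' \<in> Qset i j c N (Suc L)"
    and qq: "\<bar>q'\<bar> \<le> \<bar>q\<bar>" "q \<noteq> q'"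
    and d1: "dist_int (of_int q * z - g) \<le> (c / \<bar>of_int q\<bar>) powr e"
    and d2: "dist_int (of_int q' * z - g') \<le> (c / \<bar>of_int q'\<bar>) powr e"
    and gg: "\<bar>g - g'\<bar> \<le> 1 / real N ^ L"
  shows "dist_int (real (nat \<bar>q - q'\<bar>) * z) \<le> (c0 / real (nat \<bar>q - q'\<bar>)) powr e"
proof -
  define aq where "aq = \<bar>real_of_int q\<bar>"
  define aq' where "aq' = \<bar>real_of_int q'\<bar>"
  define p where "p = real (nat \<bar>q - q'\<bar>)"
  have em: "e \<le> m" using e by auto
  have mpos: "m > 0" using m_half by simp
  have q0: "q \<noteq> 0" "q' \<noteq> 0" using qQ qQ' unfolding Qset_def by auto
  have aq1: "aq \<ge> 1" "aq' \<ge> 1" using q0 unfolding aq_def aq'_def by (simp_all add: abs_if)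
  have aqq: "aq' \<le> aq" using qq(1) unfolding aq_def aq'_def by (metis of_int_abs of_int_le_iff)
  have pq: "p = \<bar>real_of_int q - real_of_int q'\<bar>" unfolding p_def by simp
  have p1: "p \<ge> 1" using qq(2) unfolding p_def by simp
  have p2: "p \<le> 2 * aq" using pq aqq unfolding aq_def aq'_def by linarith
  have Nr: "real N \<ge> 2" by (rule Npos)
  have Q1: "1 / (2 * real N ^ Suc (Suc L)) < (c / aq) powr m" using qQ unfolding Qset_def aq_def by simp
  have Q2: "(c / aq') powr m \<le> 1 / (2 * real N ^ Suc L)" using qQ' unfolding Qset_def aq'_def by simp
  have F1: "c / aq' \<le> real N ^ 2 * c / aq"
  proof (rule ccontr)
    assume "\<not> ?thesis"
    hence lt: "real N ^ 2 * c / aq < c / aq'" by simp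
    have "(real N ^ 2 * c / aq) powr m < (c / aq') powr m"
      by (rule powr_less_mono2) (use lt mpos c_pos aq1 in auto)
    moreover have "(real N ^ 2 * c / aq) powr m = (real N ^ 2) powr m * (c / aq) powr m"
      using c_pos aq1 by (simp add: powr_mult[symmetric] mult.assoc)
    moreover have "(real N ^ 2) powr m * (c / aq) powr m \<ge> real N * (c / aq) powr m"
      using N2_powr by (intro mult_right_mono) auto
    moreover have "real N * (1 / (2 * real N ^ Suc (Suc L))) = 1 / (2 * real N ^ Suc L)"
      using Nr by (simp add: field_simps)
    moreover have "real N * (1 / (2 * real N ^ Suc (Suc L))) < real N * (c / aq) powr m"
      using Q1 Nr by (intro mult_strict_left_mono) auto
    ultimately show False using Q2 by linarith
  qed
  define X where "X = (c0 / p) powr e"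
  have F2: "(c / aq) powr e \<le> (c / aq') powr e"
    using aqq aq1 c_pos e(2) by (intro powr_mono2) (auto simp: divide_left_mono)
  have F3: "(c / aq') powr e \<le> (2 * real N ^ 2 * c / p) powr e"
  proof (rule powr_mono2)
    have "real N ^ 2 * c / aq \<le> 2 * real N ^ 2 * c / p"
    proof -
      have "1 / aq \<le> 2 / p" using p1 p2 aq1 by (simp add: field_simps)
      hence "(real N ^ 2 * c) * (1 / aq) \<le> (real N ^ 2 * c) * (2 / p)"
        using c_pos by (intro mult_left_mono) auto
      thus ?thesis by (simp add: mult_ac)
    qed
    thus "c / aq' \<le> 2 * real N ^ 2 * c / p" using F1 by linarith
  qed (use e c_pos aq1 in auto)
  have F4: "(2 * real N ^ 2 * c / p) powr e = (2 * real N ^ 2 * c / c0) powr e * X"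
  proof -
    have eq: "2 * real N ^ 2 * c / p = (2 * real N ^ 2 * c / c0) * (c0 / p)" using c00 by simp
    have "((2 * real N ^ 2 * c / c0) * (c0 / p)) powr e = (2 * real N ^ 2 * c / c0) powr e * (c0 / p) powr e"
      by (rule powr_mult)
    thus ?thesis unfolding X_def eq .
  qed
  have F5: "(2 * real N ^ 2 * c / c0) powr e \<le> 1/4" using e C2i C2j by auto
  have X0: "X \<ge> 0" unfolding X_def by simp
  have B: "(c / aq') powr e \<le> X / 4"
  proof -
    have "(2 * real N ^ 2 * c / c0) powr e * X \<le> (1/4) * X" using F5 X0 by (rule mult_right_mono)
    thus ?thesis using F3 F4 by linarith
  qed
  have A: "(c / aq) powr e \<le> X / 4" using F2 B by linarith
  have F6: "X \<ge> (c0 / p) powr m"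
    unfolding X_def
  proof (rule powr_mono')
    show "c0 / p \<le> 1" using c01 p1 by (simp add: divide_le_eq)
  qed (use em c00 p1 in auto)
  have F7: "(c0 / p) powr m \<ge> (c0 / (2 * aq)) powr m"
    using p2 p1 c00 aq1 mpos by (intro powr_mono2) (auto simp: divide_left_mono)
  have F8: "(c0 / (2 * aq)) powr m = (c0 / (2 * c)) powr m * (c / aq) powr m"
  proof -
    have eq: "c0 / (2 * aq) = (c0 / (2 * c)) * (c / aq)" using c_pos by simp
    show ?thesis unfolding eq by (rule powr_mult)
  qed
  have F10: "(c0 / (2 * c)) powr m * (c / aq) powr m \<ge> 2 / real N ^ L"
  proof -
    have "(c0 / (2 * c)) powr m * (c / aq) powr m \<ge> (4 * real N ^ 2) * (1 / (2 * real N ^ Suc (Suc L)))"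
      using C3 Q1 Nr by (intro mult_mono) auto
    moreover have "(4 * real N ^ 2) * (1 / (2 * real N ^ Suc (Suc L))) = 2 / real N ^ L"
      using Nr by (simp add: field_simps power2_eq_square)
    ultimately show ?thesis by simp
  qed
  have H: "\<bar>g - g'\<bar> \<le> X / 2"
  proof -
    have "2 / real N ^ L \<le> X" using F6 F7 F8 F10 by linarith
    thus ?thesis using gg by (simp add: field_simps)
  qed
  have sum: "dist_int ((of_int q - of_int q') * z) \<le> X"
  proof -
    have eq: "(of_int q - of_int q') * z = (of_int q * z - g) + (- (of_int q' * z - g')) + (g - g')"
      by (simp add: algebra_simps)
    have "dist_int ((of_int q - of_int q') * z) \<le> dist_int (of_int q * z - g) + dist_int (- (of_int q' * z - g')) + dist_int (g - g')"
      unfolding eq using dist_int_add[of "of_int q * z - g + - (of_int q' * z - g')" "g - g'"]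
        dist_int_add[of "of_int q * z - g" "- (of_int q' * z - g')"] by linarith
    also have "\<dots> \<le> (c / aq) powr e + (c / aq') powr e + \<bar>g - g'\<bar>"
      using d1 d2 dist_int_abs[of "g - g'"] unfolding dist_int_minus aq_def aq'_def by linarith
    also have "\<dots> \<le> X" using A B H by linarith
    finally show ?thesis .
  qed
  have "dist_int (p * z) = dist_int ((of_int q - of_int q') * z)"
  proof (cases "q' \<le> q")
    case True
    hence "p = of_int q - of_int q'" using pq by simp
    thus ?thesis by simp
  next
    case False
    hence pe: "p = - (of_int q - of_int q')" using pq by simp
    have "p * z = - ((of_int q - of_int q') * z)" unfolding pe by (rule mult_minus_left)
    thus ?thesis by (simp add: dist_int_minus)
  qed
  thus ?thesis using sum unfolding p_def X_def by simp
qed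

end


lemma children_fst_card:
  assumes fS: "finite S" and "card S \<le> 3"
  shows "card {Q \<in> children N P. fst Q \<in> S} \<le> 3 * N"
proof -
  define f where "f = (\<lambda>(u,v). (N * fst P + u, N * snd P + v))"
  define U where "U = {u. u < N \<and> N * fst P + u \<in> S}"
  have sub: "{Q \<in> children N P. fst Q \<in> S} \<subseteq> f ` (U \<times> {..<N})"
    unfolding children_def f_def U_def by auto
  have "card U \<le> card S"
  proof -
    have "inj_on (\<lambda>u. N * fst P + u) U" by (auto intro: inj_onI)
    moreover have "(\<lambda>u. N * fst P + u) ` U \<subseteq> S" unfolding U_def by auto
    ultimately show ?thesis using fS by (metis card_inj_on_le)
  qed
  hence cU: "card U \<le> 3" using assms by simp
  have fU: "finite U" unfolding U_def by simp
  have "card {Q \<in> children N P. fst Q \<in> S} \<le> card (f ` (U \<times> {..<N}))"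
    by (rule card_mono[OF _ sub]) (simp add: fU)
  also have "\<dots> \<le> card (U \<times> {..<N})" by (rule card_image_le) (simp add: fU)
  also have "\<dots> = card U * N" by (simp add: card_cartesian_product)
  also have "\<dots> \<le> 3 * N" using cU by simp
  finally show ?thesis .
qed

lemma children_snd_card:
  assumes fS: "finite S" and "card S \<le> 3"
  shows "card {Q \<in> children N P. snd Q \<in> S} \<le> 3 * N"
proof -
  define f where "f = (\<lambda>(u,v). (N * fst P + u, N * snd P + v))"
  define U where "U = {v. v < N \<and> N * snd P + v \<in> S}"
  have sub: "{Q \<in> children N P. snd Q \<in> S} \<subseteq> f ` ({..<N} \<times> U)"
    unfolding children_def f_def U_def by auto
  have "card U \<le> card S"
  proof -
    have "inj_on (\<lambda>u. N * snd P + u) U" by (auto intro: inj_onI)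
    moreover have "(\<lambda>u. N * snd P + u) ` U \<subseteq> S" unfolding U_def by auto
    ultimately show ?thesis using fS by (metis card_inj_on_le)
  qed
  hence cU: "card U \<le> 3" using assms by simp
  have fU: "finite U" unfolding U_def by simp
  have "card {Q \<in> children N P. snd Q \<in> S} \<le> card (f ` ({..<N} \<times> U))"
    by (rule card_mono[OF _ sub]) (simp add: fU)
  also have "\<dots> \<le> card ({..<N} \<times> U)" by (rule card_image_le) (simp add: fU)
  also have "\<dots> = N * card U" by (simp add: card_cartesian_product)
  also have "\<dots> \<le> 3 * N" using cU by simp
  finally show ?thesis .
qed

lemma card_children: "card (children N P) = N * N"
proof -
  have "inj_on (\<lambda>(u,v). (N * fst P + u, N * snd P + v)) ({..<N} \<times> {..<N})"
    by (auto intro!: inj_onI)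
  thus ?thesis unfolding children_def by (simp add: card_image card_cartesian_product)
qed

lemma finite_children: "finite (children N P)"
  unfolding children_def by simp

context nt_setting
begin

lemma unique_aux:
  assumes qQ: "q \<in> Qset i j c N (Suc L)" and qQ': "q' \<in> Qset i j c N (Suc L)"
    and m1: "sqbox N L P \<inter> Rset i j x c q \<noteq> {}" and m2: "sqbox N L P \<inter> Rset i j x c q' \<noteq> {}"
    and qq: "\<bar>q'\<bar> \<le> \<bar>q\<bar>"
  shows "q = q'"
proof (rule ccontr)
  assume ne: "q \<noteq> q'"
  obtain \<gamma> where g: "\<gamma> \<in> sqbox N L P" "\<gamma> \<in> Rset i j x c q" using m1 by blast
  obtain \<gamma>' where g': "\<gamma>' \<in> sqbox N L P" "\<gamma>' \<in> Rset i j x c q'" using m2 by blast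
  have Tpos: "real N ^ L > 0" using N2 by simp
  have close: "\<bar>a - b\<bar> \<le> 1 / real N ^ L"
    if "real k / real N ^ L \<le> a" "a \<le> (real k + 1) / real N ^ L"
       "real k / real N ^ L \<le> b" "b \<le> (real k + 1) / real N ^ L" for a b k
  proof -
    have "(real k + 1) / real N ^ L - real k / real N ^ L = 1 / real N ^ L"
      by (simp add: diff_divide_distrib[symmetric])
    thus ?thesis using that by linarith
  qed
  have cl1: "\<bar>fst \<gamma> - fst \<gamma>'\<bar> \<le> 1 / real N ^ L"
    using g(1) g'(1) unfolding sqbox_def by (intro close[of "fst P"]) auto
  have cl2: "\<bar>snd \<gamma> - snd \<gamma>'\<bar> \<le> 1 / real N ^ L"
    using g(1) g'(1) unfolding sqbox_def by (intro close[of "snd P"]) auto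
  define p where "p = nat \<bar>q - q'\<bar>"
  have p1: "p \<ge> 1" using ne unfolding p_def by simp
  have c0p: "c0 / real p > 0" using c00 p1 by simp
  have "max (wpow (real p * fst x) i) (wpow (real p * snd x) j) > c0 / real p" by (rule bad[OF p1])
  hence "wpow (real p * fst x) i > c0 / real p \<or> wpow (real p * snd x) j > c0 / real p"
    by (simp add: less_max_iff_disj)
  thus False
  proof
    assume "wpow (real p * fst x) i > c0 / real p"
    from wpow_gt[OF this c0p i0] have i: "i > 0" "dist_int (real p * fst x) > (c0 / real p) powr i" by auto
    have "dist_int (real p * fst x) \<le> (c0 / real p) powr i"
      unfolding p_def
      by (rule coord_bound[OF _ i(1) qQ qQ' qq ne _ _ cl1]) (use g(2) g'(2) in \<open>auto simp: Rset_def\<close>)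
    thus False using i by simp
  next
    assume "wpow (real p * snd x) j > c0 / real p"
    from wpow_gt[OF this c0p j0] have j: "j > 0" "dist_int (real p * snd x) > (c0 / real p) powr j" by auto
    have "dist_int (real p * snd x) \<le> (c0 / real p) powr j"
      unfolding p_def
      by (rule coord_bound[OF _ j(1) qQ qQ' qq ne _ _ cl2]) (use g(2) g'(2) in \<open>auto simp: Rset_def\<close>)
    thus False using j by simp
  qed
qed

lemma unique_q:
  assumes qQ: "q \<in> Qset i j c N (Suc L)" and qQ': "q' \<in> Qset i j c N (Suc L)"
    and m1: "sqbox N L P \<inter> Rset i j x c q \<noteq> {}" and m2: "sqbox N L P \<inter> Rset i j x c q' \<noteq> {}"
  shows "q = q'"
proof (cases "\<bar>q'\<bar> \<le> \<bar>q\<bar>")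
  case True then show ?thesis using unique_aux[OF qQ qQ' m1 m2] by simp
next
  case False then show ?thesis using unique_aux[OF qQ' qQ m2 m1] by simp
qed


lemma kill_count:
  assumes qQ: "q \<in> Qset i j c N (Suc L)" and P: "P \<in> grid N L"
  shows "card {Q \<in> children N P. sqbox N (Suc L) Q \<inter> Rset i j x c q \<noteq> {}} \<le> 3 * N"
proof -
  define r where "r = (c / \<bar>of_int q\<bar>) powr m"
  have r0: "0 \<le> r" unfolding r_def by simp
  have rT: "r \<le> 1 / (2 * real N ^ Suc L)" using qQ unfolding Qset_def r_def by simp
  have N1: "N \<ge> 1" using N2 by simp
  define S where "S t = {\<alpha>::nat. \<alpha> < N ^ Suc L \<and> (\<exists>y. real \<alpha> / real N ^ Suc L \<le> y \<and> y \<le> (real \<alpha> + 1) / real N ^ Suc L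
            \<and> dist_int (t - y) \<le> r)}" for t
  have cS: "card (S t) \<le> 3" for t unfolding S_def by (rule grid_dist_card[OF N1 r0 rT])
  have fS: "finite (S t)" for t unfolding S_def by simp
  have chg: "Q \<in> grid N (Suc L)" if "Q \<in> children N P" for Q using children_grid[OF P] that by blast
  show ?thesis
  proof (cases "j \<le> i")
    case True
    hence mi: "m = i" by simp
    have "{Q \<in> children N P. sqbox N (Suc L) Q \<inter> Rset i j x c q \<noteq> {}} \<subseteq> {Q \<in> children N P. fst Q \<in> S (of_int q * fst x)}"
    proof
      fix Q assume "Q \<in> {Q \<in> children N P. sqbox N (Suc L) Q \<inter> Rset i j x c q \<noteq> {}}"
      hence Q: "Q \<in> children N P" and ne: "sqbox N (Suc L) Q \<inter> Rset i j x c q \<noteq> {}" by auto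
      then obtain \<gamma> where g: "\<gamma> \<in> sqbox N (Suc L) Q" "\<gamma> \<in> Rset i j x c q" by blast
      have "fst Q < N ^ Suc L" using chg[OF Q] unfolding grid_def by (auto simp: mem_Times_iff)
      moreover have "real (fst Q) / real N ^ Suc L \<le> fst \<gamma> \<and> fst \<gamma> \<le> (real (fst Q) + 1) / real N ^ Suc L"
        using g(1) unfolding sqbox_def by (auto simp: mem_Times_iff)
      moreover have "dist_int (of_int q * fst x - fst \<gamma>) \<le> r"
        using g(2) mi unfolding Rset_def r_def by simp
      ultimately show "Q \<in> {Q \<in> children N P. fst Q \<in> S (of_int q * fst x)}"
        using Q unfolding S_def by auto
    qed
    moreover have "card {Q \<in> children N P. fst Q \<in> S (of_int q * fst x)} \<le> 3 * N"
      by (rule children_fst_card[OF fS cS])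
    moreover have "finite {Q \<in> children N P. fst Q \<in> S (of_int q * fst x)}"
      using finite_children by simp
    ultimately show ?thesis by (meson card_mono le_trans)
  next
    case False
    hence mj: "m = j" by simp
    have "{Q \<in> children N P. sqbox N (Suc L) Q \<inter> Rset i j x c q \<noteq> {}} \<subseteq> {Q \<in> children N P. snd Q \<in> S (of_int q * snd x)}"
    proof
      fix Q assume "Q \<in> {Q \<in> children N P. sqbox N (Suc L) Q \<inter> Rset i j x c q \<noteq> {}}"
      hence Q: "Q \<in> children N P" and ne: "sqbox N (Suc L) Q \<inter> Rset i j x c q \<noteq> {}" by auto
      then obtain \<gamma> where g: "\<gamma> \<in> sqbox N (Suc L) Q" "\<gamma> \<in> Rset i j x c q" by blast
      have "snd Q < N ^ Suc L" using chg[OF Q] unfolding grid_def by (auto simp: mem_Times_iff)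
      moreover have "real (snd Q) / real N ^ Suc L \<le> snd \<gamma> \<and> snd \<gamma> \<le> (real (snd Q) + 1) / real N ^ Suc L"
        using g(1) unfolding sqbox_def by (auto simp: mem_Times_iff)
      moreover have "dist_int (of_int q * snd x - snd \<gamma>) \<le> r"
        using g(2) mj unfolding Rset_def r_def by simp
      ultimately show "Q \<in> {Q \<in> children N P. snd Q \<in> S (of_int q * snd x)}"
        using Q unfolding S_def by auto
    qed
    moreover have "card {Q \<in> children N P. snd Q \<in> S (of_int q * snd x)} \<le> 3 * N"
      by (rule children_snd_card[OF fS cS])
    moreover have "finite {Q \<in> children N P. snd Q \<in> S (of_int q * snd x)}"
      using finite_children by simp
    ultimately show ?thesis by (meson card_mono le_trans)
  qed
qed

lemma good_count:
  assumes P: "P \<in> grid N L"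
  shows "N * N - 3 * N \<le> card (goodch N (Gp i j x c N) (Suc L) P)"
proof -
  define B where "B = {Q \<in> children N P. \<not> Gp i j x c N (Suc L) Q}"
  have gB: "goodch N (Gp i j x c N) (Suc L) P = children N P - B"
    unfolding goodch_def B_def by auto
  have Bsub: "B \<subseteq> children N P" unfolding B_def by auto
  have N0: "N > 0" using N2 by simp
  have cB: "card B \<le> 3 * N"
  proof (cases "B = {}")
    case True then show ?thesis by simp
  next
    case False
    then obtain Q0 where "Q0 \<in> B" by blast
    then obtain q0 where q0: "q0 \<in> Qset i j c N (Suc L)" "sqbox N (Suc L) Q0 \<inter> Rset i j x c q0 \<noteq> {}"
      and Q0: "Q0 \<in> children N P" unfolding B_def Gp_def by blast
    have up: "sqbox N (Suc L) Q \<subseteq> sqbox N L P" if "Q \<in> children N P" for Q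
    proof -
      have "anc N 1 Q = P" by (rule anc_children[OF N0 that])
      thus ?thesis using sqbox_anc_subset[of N L 1 Q] N0 by simp
    qed
    have q0P: "sqbox N L P \<inter> Rset i j x c q0 \<noteq> {}" using q0(2) up[OF Q0] by blast
    have "B \<subseteq> {Q \<in> children N P. sqbox N (Suc L) Q \<inter> Rset i j x c q0 \<noteq> {}}"
    proof
      fix Q assume "Q \<in> B"
      then obtain q where q: "q \<in> Qset i j c N (Suc L)" "sqbox N (Suc L) Q \<inter> Rset i j x c q \<noteq> {}"
        and Q: "Q \<in> children N P" unfolding B_def Gp_def by blast
      have "sqbox N L P \<inter> Rset i j x c q \<noteq> {}" using q(2) up[OF Q] by blast
      hence "q = q0" using unique_q[OF q(1) q0(1) _ q0P] by simp
      thus "Q \<in> {Q \<in> children N P. sqbox N (Suc L) Q \<inter> Rset i j x c q0 \<noteq> {}}" using q Q by simp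
    qed
    moreover have "finite {Q \<in> children N P. sqbox N (Suc L) Q \<inter> Rset i j x c q0 \<noteq> {}}"
      using finite_children by simp
    ultimately show ?thesis using kill_count[OF q0(1) P] by (meson card_mono le_trans)
  qed
  have "card (goodch N (Gp i j x c N) (Suc L) P) = card (children N P) - card B"
    unfolding gB by (rule card_Diff_subset[OF finite_subset[OF Bsub finite_children] Bsub])
  thus ?thesis using cB card_children[of N P] by simp
qed

lemma exists_level:
  assumes q0: "q \<noteq> 0"
  shows "\<exists>L. q \<in> Qset i j c N (Suc L)"
proof -
  define r where "r = (c / \<bar>of_int q\<bar>) powr m"
  have rpos: "r > 0" unfolding r_def using c_pos q0 by simp
  have rle: "r \<le> 1 / (2 * real N)"
  proof -
    have "c / \<bar>of_int q\<bar> \<le> c" using c_pos q0 by (simp add: divide_le_eq abs_if)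
    hence "r \<le> c powr m" unfolding r_def using c_pos m_half by (intro powr_mono2) auto
    thus ?thesis using C1 by simp
  qed
  have Nr: "real N \<ge> 2" by (rule Npos)
  have ex: "\<exists>L. 1 / (2 * real N ^ Suc L) < r"
  proof -
    have "\<exists>n. (1 / real N) ^ n < r" using Nr rpos by (intro real_arch_pow_inv) auto
    then obtain n where n: "(1 / real N) ^ n < r" by blast
    have "1 / (2 * real N ^ Suc n) \<le> (1 / real N) ^ n"
      using Nr by (simp add: power_one_over field_simps)
    thus ?thesis using n by (metis le_less_trans)
  qed
  define L0 where "L0 = (LEAST L. 1 / (2 * real N ^ Suc L) < r)"
  have L0a: "1 / (2 * real N ^ Suc L0) < r" unfolding L0_def using ex by (rule LeastI_ex)
  show ?thesis
  proof (cases L0)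
    case 0
    thus ?thesis using L0a rle by simp
  next
    case (Suc L1)
    have "\<not> (1 / (2 * real N ^ Suc L1) < r)"
      using not_less_Least[of L1 "\<lambda>L. 1 / (2 * real N ^ Suc L) < r"] Suc unfolding L0_def by simp
    hence "r \<le> 1 / (2 * real N ^ Suc L1)" by simp
    hence "q \<in> Qset i j c N (Suc L1)"
      using L0a Suc q0 unfolding Qset_def r_def by simp
    thus ?thesis by blast
  qed
qed

end


lemma sqrt_bound_aux:
  fixes a b :: real
  assumes "0 \<le> a" "0 \<le> b" "a \<le> b ^ 2"
  shows "sqrt a \<le> b"
  using assms by (metis real_sqrt_abs real_sqrt_le_mono abs_of_nonneg)

lemma choose_c:
  fixes i j c0 :: real and N :: nat
  assumes i0: "i \<ge> 0" and j0: "j \<ge> 0" and ij: "i + j = 1" and c00: "c0 > 0" and c01: "c0 \<le> 1"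
    and N2: "N \<ge> 2"
  shows "\<exists>c>0. c powr (max i j) \<le> 1 / (2 * real N) \<and>
     (i > 0 \<longrightarrow> (2 * real N ^ 2 * c / c0) powr i \<le> 1/4) \<and>
     (j > 0 \<longrightarrow> (2 * real N ^ 2 * c / c0) powr j \<le> 1/4) \<and>
     (c0 / (2 * c)) powr (max i j) \<ge> 4 * real N ^ 2"
proof -
  define m where "m = max i j"
  have mh: "m \<ge> 1/2" "m \<le> 1" using i0 j0 ij unfolding m_def by linarith+
  have Nr: "real N \<ge> 2" using N2 by simp
  define K where "K = 2 * real N ^ 2"
  have K0: "K \<ge> 8"
  proof -
    have "(2::real) ^ 2 \<le> real N ^ 2" using Nr by (intro power_mono) auto
    thus ?thesis unfolding K_def by simp
  qed
  have K2: "K ^ 2 \<ge> 1"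
  proof -
    have "(1::real) ^ 2 \<le> K ^ 2" using K0 by (intro power_mono) auto
    thus ?thesis by simp
  qed
  define ti where "ti = (if i > 0 then (1/4) powr (1/i) / K else 1)"
  define tj where "tj = (if j > 0 then (1/4) powr (1/j) / K else 1)"
  define t where "t = min (1 / (8 * K ^ 2)) (min ti tj)"
  have ti0: "ti > 0" unfolding ti_def using K0 by auto
  have tj0: "tj > 0" unfolding tj_def using K0 by auto
  have t0: "t > 0" unfolding t_def using ti0 tj0 K0 by auto
  have t1: "t \<le> 1 / (8 * K ^ 2)" unfolding t_def by simp
  have tK: "t \<le> 1"
  proof -
    have "1 / (8 * K ^ 2) \<le> 1" using K2 by (simp add: divide_le_eq)
    thus ?thesis using t1 by linarith
  qed
  define c where "c = c0 * t"
  have c0': "c > 0" unfolding c_def using c00 t0 by simp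
  have cle: "c \<le> t" unfolding c_def using c01 t0 by (simp add: mult_le_cancel_right1)
  have C1: "c powr m \<le> 1 / (2 * real N)"
  proof -
    have "c powr m \<le> c powr (1/2)" using cle tK c0' mh by (intro powr_mono') auto
    also have "\<dots> = sqrt c" using c0' by (simp add: powr_half_sqrt)
    also have "\<dots> \<le> 1 / (2 * real N)"
    proof (rule sqrt_bound_aux)
      have "c \<le> 1 / (8 * K ^ 2)" using cle t1 by linarith
      also have "\<dots> \<le> (1 / (2 * real N)) ^ 2"
      proof -
        have "(2::real) * 2 \<le> real N * real N" using Nr by (intro mult_mono) auto
        hence NN: "real N * real N \<ge> 4" by simp
        thus ?thesis unfolding K_def using Nr by (simp add: field_simps power2_eq_square)
      qed
      finally show "c \<le> (1 / (2 * real N)) ^ 2" .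
    qed (use c0' Nr in auto)
    finally show ?thesis .
  qed
  have kc: "2 * real N ^ 2 * c / c0 = K * t" unfolding c_def K_def using c00 by simp
  have C2: "(2 * real N ^ 2 * c / c0) powr e \<le> 1/4" if "e > 0" "e = i \<or> e = j" for e
  proof -
    have "t \<le> (1/4) powr (1/e) / K" using that unfolding t_def ti_def tj_def by auto
    hence "K * t \<le> (1/4) powr (1/e)" using K0 by (simp add: field_simps)
    hence "(K * t) powr e \<le> ((1/4) powr (1/e)) powr e" using that K0 t0 by (intro powr_mono2) auto
    also have "\<dots> = 1/4" using that by (simp add: powr_powr)
    finally show ?thesis unfolding kc .
  qed
  have C3: "(c0 / (2 * c)) powr m \<ge> 4 * real N ^ 2"
  proof -
    have e: "c0 / (2 * c) = 1 / (2 * t)" unfolding c_def using c00 by simp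
    have b1: "1 / (2 * t) \<ge> 4 * K ^ 2" using t1 t0 K0 by (simp add: field_simps)
    have b2: "4 * K ^ 2 \<ge> 1" using K2 by linarith
    have "(1 / (2 * t)) powr m \<ge> (1 / (2 * t)) powr (1/2)" using b1 b2 mh by (intro powr_mono) auto
    moreover have "(1 / (2 * t)) powr (1/2) = sqrt (1 / (2 * t))" using t0 by (simp add: powr_half_sqrt)
    moreover have "sqrt (1 / (2 * t)) \<ge> sqrt (4 * K ^ 2)" using b1 by (rule real_sqrt_le_mono)
    moreover have "sqrt (4 * K ^ 2) = 2 * K" using K0 by (simp add: real_sqrt_mult)
    moreover have "2 * K = 4 * real N ^ 2" unfolding K_def by simp
    ultimately show ?thesis unfolding e by linarith
  qed
  show ?thesis using c0' C1 C2 C3 unfolding m_def by blast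
qed

lemma choose_N:
  fixes s :: real
  assumes "0 < s" "s < 2"
  shows "\<exists>N::nat. N \<ge> 4 \<and> real N powr s \<le> real (N * N - 3 * N)"
proof -
  define N where "N = nat \<lceil>4 powr (1 / (2 - s))\<rceil> + 4"
  have N4: "N \<ge> 4" unfolding N_def by simp
  have Nr: "real N \<ge> 4" using N4 by simp
  have NK: "real N \<ge> 4 powr (1 / (2 - s))" unfolding N_def by linarith
  have "real N powr (2 - s) \<ge> (4 powr (1 / (2 - s))) powr (2 - s)"
    using NK assms by (intro powr_mono2) auto
  also have "(4 powr (1 / (2 - s))) powr (2 - s) = 4" using assms by (simp add: powr_powr)
  finally have P: "real N powr (2 - s) \<ge> 4" .
  have "real N powr s * real N powr (2 - s) = real N powr 2" using Nr by (simp add: powr_add[symmetric])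
  also have "\<dots> = real N * real N" using Nr by (simp add: powr_numeral power2_eq_square)
  finally have eq: "real N powr s * real N powr (2 - s) = real N * real N" .
  have "real N powr s * 4 \<le> real N powr s * real N powr (2 - s)"
    using P by (intro mult_left_mono) auto
  hence A: "real N powr s * 4 \<le> real N * real N" using eq by simp
  have "3 * N \<le> N * N" using N4 by simp
  hence "real (N * N - 3 * N) = real (N * N) - real (3 * N)" by (rule of_nat_diff)
  hence eqD: "real (N * N - 3 * N) = real N * real N - 3 * real N" by (simp only: of_nat_mult of_nat_numeral)
  have "real N * real N / 4 \<le> real N * real N - 3 * real N"
  proof -
    have "4 * real N \<le> real N * real N" using Nr by (intro mult_right_mono) auto
    thus ?thesis by linarith
  qed
  hence "real N powr s \<le> real N * real N - 3 * real N" using A by linarith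
  hence "real N powr s \<le> real (N * N - 3 * N)" by (subst eqD)
  thus ?thesis using N4 by blast
qed


context nt_setting
begin

lemma cantor_ok:
  assumes N4: "N \<ge> 4"
  shows "cantor N (N*N - 3*N) (Gp i j x c N)"
proof
  show "2 \<le> N" using N4 by simp
  have "4 * N \<le> N * N" using N4 by simp
  thus "1 \<le> N * N - 3 * N" using N4 by linarith
  show "N * N - 3 * N \<le> card (goodch N (Gp i j x c N) (Suc L) P)" if "P \<in> grid N L" for L P
    by (rule good_count[OF that])
qed

lemma Kset_bad:
  assumes N4: "N \<ge> 4"
  shows "cantor.Kset N (N*N - 3*N) (Gp i j x c N) \<subseteq> Bad_inhom x i j"
proof -
  interpret cantor N "N*N - 3*N" "Gp i j x c N" by (rule cantor_ok[OF N4])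
  show ?thesis
  proof
    fix \<gamma> assume g: "\<gamma> \<in> Kset"
    have "\<gamma> \<in> unit_square" using Kset_sub g unfolding unit_square_def by blast
    moreover have "\<forall>q::int. q \<noteq> 0 \<longrightarrow>
         max (wpow (real_of_int q * fst x - fst \<gamma>) i) (wpow (real_of_int q * snd x - snd \<gamma>) j)
           > c / \<bar>real_of_int q\<bar>"
    proof (intro allI impI)
      fix q :: int assume q0: "q \<noteq> 0"
      obtain L where L: "q \<in> Qset i j c N (Suc L)" using exists_level[OF q0] by blast
      obtain Q where Q: "Q \<in> alive (Suc L)" "\<gamma> \<in> sqbox N (Suc L) Q" using g unfolding Kset_def by blast
      have "Gp i j x c N (Suc L) Q" by (rule alive_good[OF Q(1)])
      hence "sqbox N (Suc L) Q \<inter> Rset i j x c q = {}" using L unfolding Gp_def by blast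
      hence "\<gamma> \<notin> Rset i j x c q" using Q(2) by blast
      thus "max (wpow (real_of_int q * fst x - fst \<gamma>) i) (wpow (real_of_int q * snd x - snd \<gamma>) j)
           > c / \<bar>real_of_int q\<bar>" by (rule avoid[OF i0 j0 ij c_pos q0])
    qed
    ultimately show "\<gamma> \<in> Bad_inhom x i j" unfolding Bad_inhom_def using c_pos by blast
  qed
qed

end


lemma coord_cell:
  fixes y :: real and n :: nat
  assumes n1: "n \<ge> 1" and y: "0 \<le> y" "y \<le> 1"
  defines "a \<equiv> min (nat \<lfloor>y * real n\<rfloor>) (n - 1)"
  shows "a < n" "real a / real n \<le> y" "y \<le> (real a + 1) / real n"
proof -
  show "a < n" unfolding a_def using n1 by simp
  have nr: "real n > 0" using n1 by simp
  have yn: "0 \<le> y * real n" using y nr by simp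
  have "real a \<le> y * real n"
  proof -
    have "real a \<le> real (nat \<lfloor>y * real n\<rfloor>)" unfolding a_def by simp
    also have "\<dots> = of_int \<lfloor>y * real n\<rfloor>" using yn by simp
    also have "\<dots> \<le> y * real n" by simp
    finally show ?thesis .
  qed
  thus "real a / real n \<le> y" using nr by (simp add: divide_le_eq)
  have "y * real n \<le> real a + 1"
  proof (cases "nat \<lfloor>y * real n\<rfloor> \<le> n - 1")
    case True
    hence "a = nat \<lfloor>y * real n\<rfloor>" unfolding a_def by simp
    hence "real a = of_int \<lfloor>y * real n\<rfloor>" using yn by simp
    thus ?thesis by linarith
  next
    case False
    hence "a = n - 1" unfolding a_def by simp
    hence "real a + 1 = real n" using n1 by simp
    moreover have "y * real n \<le> real n" using y nr by simp
    ultimately show ?thesis by simp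
  qed
  thus "y \<le> (real a + 1) / real n" using nr by (simp add: le_divide_eq)
qed

lemma sqbox1_diam:
  assumes n1: "n \<ge> 1"
  shows "bounded (sqbox n 1 P) \<and> diameter (sqbox n 1 P) \<le> 2 / real n"
proof
  show b: "bounded (sqbox n 1 P)" using compact_sqbox compact_imp_bounded by blast
  show "diameter (sqbox n 1 P) \<le> 2 / real n"
  proof (rule diameter_le)
    show "sqbox n 1 P \<noteq> {} \<or> 0 \<le> 2 / real n" by simp
    fix p q assume pq: "p \<in> sqbox n 1 P" "q \<in> sqbox n 1 P"
    have d1: "\<bar>fst p - fst q\<bar> \<le> 1 / real n" and d2: "\<bar>snd p - snd q\<bar> \<le> 1 / real n"
    proof -
      have e: "(real k + 1) / real n - real k / real n = 1 / real n" for k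
        by (simp add: diff_divide_distrib[symmetric])
      show "\<bar>fst p - fst q\<bar> \<le> 1 / real n"
        using pq e[of "fst P"] unfolding sqbox_def by (auto simp: mem_Times_iff)
      show "\<bar>snd p - snd q\<bar> \<le> 1 / real n"
        using pq e[of "snd P"] unfolding sqbox_def by (auto simp: mem_Times_iff)
    qed
    have "norm (p - q) \<le> norm (fst p - fst q) + norm (snd p - snd q)"
    proof -
      have "p - q = (fst p - fst q, snd p - snd q)" by (simp add: prod_eq_iff)
      thus ?thesis using norm_Pair_le[of "fst p - fst q" "snd p - snd q"] by simp
    qed
    also have "\<dots> \<le> 2 / real n" using d1 d2 by simp
    finally show "norm (p - q) \<le> 2 / real n" .
  qed
qed


lemma upper_cover:
  fixes A :: "(real \<times> real) set"
  assumes A: "A \<subseteq> unit_square" and s2: "s > 2" and d0: "\<delta> > 0" and e0: "\<epsilon> > 0"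
  shows "hausdorff_pre s \<delta> A \<le> ennreal \<epsilon>"
proof -
  define K where "K = (2 powr s / \<epsilon>) powr (1 / (s - 2))"
  define n where "n = nat \<lceil>max (2 / \<delta>) K\<rceil> + 1"
  have n1: "n \<ge> 1" unfolding n_def by simp
  have nr: "real n > 0" using n1 by simp
  have nK: "real n \<ge> K" "real n \<ge> 2 / \<delta>" unfolding n_def by linarith+
  have K0: "K > 0" unfolding K_def using e0 by simp
  have nd: "2 / real n \<le> \<delta>" using nK(2) d0 nr by (simp add: divide_le_eq field_simps)
  define U where "U k = (if k < n * n then sqbox n 1 (k div n, k mod n) else {})" for k
  have Ub: "bounded (U k) \<and> diameter (U k) \<le> \<delta>" for k
    using sqbox1_diam[OF n1, of "(k div n, k mod n)"] nd d0 unfolding U_def by auto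
  have cov: "A \<subseteq> (\<Union>k. U k)"
  proof
    fix y assume "y \<in> A"
    hence y: "0 \<le> fst y" "fst y \<le> 1" "0 \<le> snd y" "snd y \<le> 1" using A unfolding unit_square_def by auto
    define a where "a = min (nat \<lfloor>fst y * real n\<rfloor>) (n - 1)"
    define b where "b = min (nat \<lfloor>snd y * real n\<rfloor>) (n - 1)"
    note ca = coord_cell[OF n1 y(1,2), folded a_def]
    note cb = coord_cell[OF n1 y(3,4), folded b_def]
    define k where "k = a * n + b"
    have kdiv: "k div n = a" "k mod n = b" unfolding k_def using cb(1) by auto
    have kl: "k < n * n"
    proof -
      have "a * n + b < a * n + n" using cb(1) by simp
      also have "\<dots> = (a + 1) * n" by simp
      also have "\<dots> \<le> n * n" using ca(1) by (intro mult_right_mono) auto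
      finally show ?thesis unfolding k_def .
    qed
    have "y \<in> U k" unfolding U_def using kl kdiv ca cb
      by (cases y) (auto simp: sqbox_def mem_Times_iff)
    thus "y \<in> (\<Union>k. U k)" by blast
  qed
  have "hausdorff_pre s \<delta> A \<le> cover_sum s U"
    unfolding hausdorff_pre_def by (rule INF_lower) (use cov Ub in auto)
  also have "cover_sum s U = (\<Sum>k<n*n. (if U k = {} then 0 else if s = 0 then 1 else ennreal (diameter (U k) powr s)))"
    unfolding cover_sum_def by (rule suminf_finite) (auto simp: U_def)
  also have "\<dots> \<le> (\<Sum>k<n*n. ennreal ((2 / real n) powr s))"
  proof (rule sum_mono)
    fix k assume "k \<in> {..<n*n}"
    have "diameter (U k) powr s \<le> (2 / real n) powr s"
      using sqbox1_diam[OF n1, of "(k div n, k mod n)"] s2 unfolding U_def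
      by (auto intro!: powr_mono2 simp: diameter_ge_0)
    thus "(if U k = {} then 0 else if s = 0 then 1 else ennreal (diameter (U k) powr s)) \<le> ennreal ((2 / real n) powr s)"
      using s2 by (auto intro: ennreal_leI)
  qed
  also have "\<dots> = ennreal (real (n * n) * (2 / real n) powr s)"
    by (simp add: ennreal_mult ennreal_of_nat_eq_real_of_nat)
  also have "real (n * n) * (2 / real n) powr s \<le> \<epsilon>"
  proof -
    have "real (n * n) * (2 / real n) powr s = 2 powr s * (real n powr 2 / real n powr s)"
      using nr by (simp add: powr_divide powr_numeral power2_eq_square)
    also have "real n powr 2 / real n powr s = 1 / real n powr (s - 2)"
      using nr by (simp add: powr_diff)
    also have "real n powr (s - 2) \<ge> K powr (s - 2)" using nK(1) K0 s2 by (intro powr_mono2) auto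
    hence "1 / real n powr (s - 2) \<le> 1 / K powr (s - 2)" using K0 nr by (intro divide_left_mono) (auto intro!: mult_pos_pos)
    hence "2 powr s * (1 / real n powr (s - 2)) \<le> 2 powr s * (1 / K powr (s - 2))"
      by (rule mult_left_mono) simp
    also have "K powr (s - 2) = 2 powr s / \<epsilon>" unfolding K_def using s2 e0 by (simp add: powr_powr)
    also have "2 powr s * (1 / (2 powr s / \<epsilon>)) = \<epsilon>" by simp
    finally show ?thesis .
  qed
  hence "ennreal (real (n * n) * (2 / real n) powr s) \<le> ennreal \<epsilon>" by (rule ennreal_leI)
  finally show ?thesis .
qed

lemma upper:
  fixes A :: "(real \<times> real) set"
  assumes A: "A \<subseteq> unit_square" and s2: "s > 2"
  shows "hausdorff_measure s A = 0"
proof -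
  have "hausdorff_pre s \<delta> A = 0" if d0: "\<delta> > 0" for \<delta>
  proof -
    have "hausdorff_pre s \<delta> A \<le> 0"
    proof (rule ennreal_le_epsilon)
      fix e :: real assume "e > 0"
      thus "hausdorff_pre s \<delta> A \<le> 0 + ennreal e" using upper_cover[OF A s2 d0] by simp
    qed
    thus ?thesis by simp
  qed
  thus ?thesis unfolding hausdorff_measure_def by simp
qed


lemma H0_pos:
  fixes A :: "(real \<times> real) set"
  assumes "A \<noteq> {}"
  shows "hausdorff_measure 0 A \<noteq> 0"
proof -
  obtain a where a: "a \<in> A" using assms by blast
  have "1 \<le> hausdorff_pre 0 1 A"
    unfolding hausdorff_pre_def
  proof (rule INF_greatest)
    fix U :: "nat \<Rightarrow> (real \<times> real) set"
    assume "U \<in> {U. A \<subseteq> (\<Union>n. U n) \<and> (\<forall>n. bounded (U n) \<and> diameter (U n) \<le> 1)}"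
    then obtain n where n: "a \<in> U n" using a by blast
    have "(\<Sum>k\<in>{n}. (if U k = {} then 0 else if (0::real) = 0 then 1 else ennreal (diameter (U k) powr 0)))
          \<le> cover_sum 0 U"
      unfolding cover_sum_def by (rule sum_le_suminf[OF summableI]) auto
    moreover have "U n \<noteq> {}" using n by auto
    ultimately show "1 \<le> cover_sum 0 U" by simp
  qed
  also have "\<dots> \<le> hausdorff_measure 0 A"
    unfolding hausdorff_measure_def by (rule SUP_upper) simp
  finally show ?thesis by auto
qed

lemma lower:
  fixes i j s :: real and x :: "real \<times> real"
  assumes i0: "i \<ge> 0" and j0: "j \<ge> 0" and ij: "i + j = 1" and xB: "x \<in> Bad i j"
    and s0: "0 \<le> s" and s2: "s < 2"
  shows "hausdorff_measure s (Bad_inhom x i j) \<noteq> 0"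
proof -
  obtain c0 where c0: "c0 > 0"
    and b0: "\<forall>q::nat. q \<ge> 1 \<longrightarrow> max (wpow (real q * fst x) i) (wpow (real q * snd x) j) > c0 / real q"
    using xB unfolding Bad_def by blast
  define c1 where "c1 = min c0 1"
  have c1: "c1 > 0" "c1 \<le> 1" unfolding c1_def using c0 by auto
  have b1: "max (wpow (real p * fst x) i) (wpow (real p * snd x) j) > c1 / real p" if "p \<ge> 1" for p :: nat
  proof -
    have "c1 / real p \<le> c0 / real p" unfolding c1_def using that by (intro divide_right_mono) auto
    thus ?thesis using b0 that by fastforce
  qed
  have inst: "\<exists>c. cantor N (N*N - 3*N) (Gp i j x c N) \<and>
      cantor.Kset N (N*N - 3*N) (Gp i j x c N) \<subseteq> Bad_inhom x i j" if N4: "N \<ge> 4" for N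
  proof -
    have N2: "N \<ge> 2" using N4 by simp
    obtain c where c: "c > 0" "c powr (max i j) \<le> 1 / (2 * real N)"
      "i > 0 \<longrightarrow> (2 * real N ^ 2 * c / c1) powr i \<le> 1/4"
      "j > 0 \<longrightarrow> (2 * real N ^ 2 * c / c1) powr j \<le> 1/4"
      "(c1 / (2 * c)) powr (max i j) \<ge> 4 * real N ^ 2"
      using choose_c[OF i0 j0 ij c1(1) c1(2) N2] by blast
    interpret nt_setting i j x c1 c N
      by (unfold_locales) (use i0 j0 ij c1 b1 N2 c in auto)
    show ?thesis using cantor_ok[OF N4] Kset_bad[OF N4] by blast
  qed
  show ?thesis
  proof (cases "s = 0")
    case True
    obtain c where c: "cantor 4 (4*4 - 3*4) (Gp i j x c 4)"
      "cantor.Kset 4 (4*4 - 3*4) (Gp i j x c 4) \<subseteq> Bad_inhom x i j"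
      using inst[of 4] by auto
    have "cantor.Kset 4 (4*4 - 3*4) (Gp i j x c 4) \<noteq> {}"
      by (rule cantor.Kset_nonempty[OF c(1)])
    hence "Bad_inhom x i j \<noteq> {}" using c(2) by blast
    thus ?thesis using H0_pos True by simp
  next
    case False
    hence sp: "s > 0" using s0 by simp
    obtain N where N: "N \<ge> 4" "real N powr s \<le> real (N * N - 3 * N)" using choose_N[OF sp s2] by blast
    obtain c where c: "cantor N (N*N - 3*N) (Gp i j x c N)"
      "cantor.Kset N (N*N - 3*N) (Gp i j x c N) \<subseteq> Bad_inhom x i j"
      using inst[OF N(1)] by blast
    show ?thesis by (rule cantor.hausdorff_pos[OF c(1) sp _ N(2) c(2)]) (use s2 in simp)
  qed
qed

theorem theorem2p2:
  fixes i j :: real and x :: "real \<times> real"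
  assumes "i \<ge> 0" and "j \<ge> 0" and "i + j = 1"
    and "x \<in> Bad i j"
  shows "hausdorff_dim (Bad_inhom x i j) = 2"
proof -
  define S where "S = {s. s \<ge> 0 \<and> hausdorff_measure s (Bad_inhom x i j) = 0}"
  have S_ge: "s \<ge> 2" if "s \<in> S" for s
  proof (rule ccontr)
    assume "\<not> s \<ge> 2"
    hence s2: "s < 2" by simp
    have "0 \<le> s" using that unfolding S_def by simp
    hence "hausdorff_measure s (Bad_inhom x i j) \<noteq> 0"
      using lower[OF assms _ s2] by simp
    thus False using that unfolding S_def by simp
  qed
  have S_gt: "s \<in> S" if "s > 2" for s
  proof -
    have "Bad_inhom x i j \<subseteq> unit_square" unfolding Bad_inhom_def by auto
    thus ?thesis using upper[OF _ that] that unfolding S_def by simp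
  qed
  have "Inf (ereal ` S) = 2"
  proof (rule antisym)
    show "Inf (ereal ` S) \<le> 2"
      unfolding Inf_le_iff
    proof (intro allI impI)
      fix y :: ereal assume "y > 2"
      then obtain z where z: "2 < ereal z" "ereal z < y" using ereal_dense2 by blast
      hence "z \<in> S" using S_gt by simp
      thus "\<exists>a\<in>ereal ` S. a < y" using z by blast
    qed
    show "2 \<le> Inf (ereal ` S)"
      by (rule Inf_greatest) (use S_ge in auto)
  qed
  thus ?thesis unfolding hausdorff_dim_def S_def .
qed


end
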